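(* Let $H\subseteq\mathbb N$ be a numerical semigroup and $R=k[[H]]=k[[t^h\mid h\in H]]\subseteq k[[t]]$ the numerical semigroup ring over a field $k$. Write $H=\{a_0=0<a_1<a_2<\cdots\}$ and let $n$ be the smallest integer with $a_{n+i}=a_n+i$ for all $i\ge 0$; assume $n\ge 3$. With $I_i$, $\mathcal T(R)$, $\mathcal I(R)$ as in the context, the following are equivalent: (1) $\mathcal T(R)=\mathcal I(R)$; (2) $I_iI_{i+2}=t^{a_i}I_{i+2}$ for all $i\in\{1,\dots,n-2\}$; (3) $a_j+a_{i+1}-a_i\in H$ for all $i\in\{1,\dots,n-2\}$ and $j\in\{i+2,\dots,n\}$. If $k$ is infinite, these are also equivalent to: (4) $\mathcal T(R)$ is a finite set.
   Context: $v$ denotes the $t$-adic order valuation on $k((t))$ (so $v(R\setminus\{0\})=H$). For $0\le i\le n$, $I_i=\{r\in R\mid v(r)\ge a_i\}$ and $\mathcal I(R)=\{I_0,\dots,I_n\}$. The trace ideal of an $R$-module $M$ is $\mathrm{tr}_R(M)=\sum_{f\in\mathrm{Hom}_R(M,R)}\mathrm{Im} f$; an ideal is a trace ideal if it is $\mathrm{tr}_R(M)$ for some $M$. $\mathcal T(R)$ is the set of nonzero trace ideals of $R$. *)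

theory Defs
  imports "HOL-Algebra.Ideal_Product" "HOL-Algebra.Module"
    "HOL-Computational_Algebra.Formal_Power_Series" "HOL-Library.Infinite_Set"
begin

definition numerical_semigroup :: "nat set \<Rightarrow> bool" where
  "numerical_semigroup H \<longleftrightarrow> 0 \<in> H \<and> (\<forall>x\<in>H. \<forall>y\<in>H. x + y \<in> H) \<and> finite (UNIV - H)"

definition sg_elem :: "nat set \<Rightarrow> nat \<Rightarrow> nat" where
  "sg_elem H i = enumerate H i"

definition sg_n :: "nat set \<Rightarrow> nat" where
  "sg_n H = (LEAST n. \<forall>i. sg_elem H (n + i) = sg_elem H n + i)"

definition sg_carrier :: "nat set \<Rightarrow> 'k::field fps set" where
  "sg_carrier H = {f. \<forall>m. m \<notin> H \<longrightarrow> fps_nth f m = 0}"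

definition sg_ring :: "nat set \<Rightarrow> ('k::field fps) ring" where
  "sg_ring H = \<lparr> carrier = sg_carrier H, Group.monoid.mult = (*), Group.monoid.one = 1, zero = 0, add = (+) \<rparr>"

definition sg_self_module :: "nat set \<Rightarrow> ('k::field fps, 'k fps) module" where
  "sg_self_module H = \<lparr> carrier = sg_carrier H, Group.monoid.mult = (*), Group.monoid.one = 1, zero = 0, add = (+),
                        smult = (*) \<rparr>"

text \<open>t-adic order valuation; v(0) = infinity is handled by allowing r = 0.\<close>
definition sg_ideal_I :: "nat set \<Rightarrow> nat \<Rightarrow> 'k::field fps set" where
  "sg_ideal_I H i = {r \<in> sg_carrier H. r = 0 \<or> subdegree r \<ge> sg_elem H i}"

definition sg_calI :: "nat set \<Rightarrow> 'k::field fps set set" where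
  "sg_calI H = {sg_ideal_I H i | i. i \<le> sg_n H}"

definition lin_hom :: "('a, 'c) ring_scheme \<Rightarrow> ('a, 'b, 'd) module_scheme
                        \<Rightarrow> ('a, 'e, 'f) module_scheme \<Rightarrow> ('b \<Rightarrow> 'e) set" where
  "lin_hom R M N = {f. f \<in> carrier M \<rightarrow> carrier N \<and>
      (\<forall>x\<in>carrier M. \<forall>y\<in>carrier M. f (x \<oplus>\<^bsub>M\<^esub> y) = f x \<oplus>\<^bsub>N\<^esub> f y) \<and>
      (\<forall>a\<in>carrier R. \<forall>x\<in>carrier M. f (a \<odot>\<^bsub>M\<^esub> x) = a \<odot>\<^bsub>N\<^esub> f x)}"

definition trace_ideal_of :: "nat set \<Rightarrow> ('k::field fps, 'b, 'd) module_scheme \<Rightarrow> 'k fps set" where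
  "trace_ideal_of H M = genideal (sg_ring H)
      (\<Union>f \<in> lin_hom (sg_ring H) M (sg_self_module H). f ` carrier M)"

text \<open>Nonzero trace ideals. Modules are taken with carrier in the type 'k fps; this
  loses nothing, since every trace ideal I satisfies I = tr_R(I) and I is such a module.\<close>
definition sg_calT :: "nat set \<Rightarrow> 'k::field fps set set" where
  "sg_calT H = {I. I \<noteq> {0} \<and>
      (\<exists>M :: ('k fps, 'k fps) module. Module.module (sg_ring H) M \<and> I = trace_ideal_of H M)}"

end

theory Submission imports Defs begin
unbundle fps_syntax

section \<open>Supports of power series\<close>

definition supp_in :: "nat set \<Rightarrow> 'a::zero fps set" where
  "supp_in S = {f. \<forall>k. f $ k \<noteq> 0 \<longrightarrow> k \<in> S}"

definition sumset :: "nat set \<Rightarrow> nat set \<Rightarrow> nat set" where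
  "sumset A B = {a + b | a b. a \<in> A \<and> b \<in> B}"

lemma supp_inI: "(\<And>k. f $ k \<noteq> 0 \<Longrightarrow> k \<in> S) \<Longrightarrow> f \<in> supp_in S"
  unfolding supp_in_def by blast

lemma supp_inD: "f \<in> supp_in S \<Longrightarrow> f $ k \<noteq> 0 \<Longrightarrow> k \<in> S"
  unfolding supp_in_def by blast

lemma supp_inD': "f \<in> supp_in S \<Longrightarrow> k \<notin> S \<Longrightarrow> f $ k = 0"
  unfolding supp_in_def by blast

lemma supp_in_0 [simp]: "0 \<in> supp_in S"
  by (auto intro: supp_inI)

lemma supp_in_add:
  assumes f: "f \<in> supp_in S" and g: "g \<in> supp_in S" shows "(f + g :: 'a::monoid_add fps) \<in> supp_in S"
proof (rule supp_inI)
  fix k assume "(f + g) $ k \<noteq> 0"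
  then have "f $ k \<noteq> 0 \<or> g $ k \<noteq> 0" by auto
  then show "k \<in> S" using f g supp_inD by blast
qed

lemma supp_in_uminus: "f \<in> supp_in S \<Longrightarrow> (- f :: 'a::group_add fps) \<in> supp_in S"
  unfolding supp_in_def by auto

lemma supp_in_diff:
  assumes f: "f \<in> supp_in S" and g: "g \<in> supp_in S" shows "(f - g :: 'a::group_add fps) \<in> supp_in S"
proof (rule supp_inI)
  fix k assume "(f - g) $ k \<noteq> 0"
  then have "f $ k \<noteq> 0 \<or> g $ k \<noteq> 0" by auto
  then show "k \<in> S" using f g supp_inD by blast
qed

lemma supp_in_mono: "f \<in> supp_in S \<Longrightarrow> S \<subseteq> T \<Longrightarrow> f \<in> supp_in T"
  unfolding supp_in_def by auto

lemma supp_in_const: "0 \<in> S \<Longrightarrow> (fps_const c :: 'a::zero fps) \<in> supp_in S"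
  unfolding supp_in_def by auto

lemma supp_in_X_power: "m \<in> S \<Longrightarrow> (fps_X ^ m :: 'a::comm_ring_1 fps) \<in> supp_in S"
  unfolding supp_in_def by (auto simp: fps_X_power_iff)

lemma supp_in_mult:
  assumes "f \<in> supp_in A" "g \<in> supp_in B"
  shows "(f * g :: 'a::comm_ring_1 fps) \<in> supp_in (sumset A B)"
proof (rule supp_inI)
  fix k assume "(f * g) $ k \<noteq> 0"
  then have "(\<Sum>i=0..k. f$i * g$(k - i)) \<noteq> 0" by (simp add: fps_mult_nth)
  then obtain i where i: "i \<in> {0..k}" "f$i * g$(k-i) \<noteq> 0" by (meson sum.neutral)
  then have "f $ i \<noteq> 0" "g $ (k - i) \<noteq> 0" by auto
  then have "i \<in> A" "k - i \<in> B" using assms supp_inD by blast+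
  then show "k \<in> sumset A B" unfolding sumset_def using i by force
qed

lemma supp_in_inverse:
  assumes T0: "0 \<in> T" and Tadd: "\<And>x y. x \<in> T \<Longrightarrow> y \<in> T \<Longrightarrow> x + y \<in> T"
    and u: "u \<in> supp_in T" and u0: "u $ 0 \<noteq> (0::'a::field)"
  shows "inverse u \<in> supp_in T"
proof -
  let ?v = "inverse u"
  have uv: "u * ?v = 1" using inverse_mult_eq_1'[OF u0] .
  have "?v $ k \<noteq> 0 \<longrightarrow> k \<in> T" for k
  proof (induction k rule: less_induct)
    case (less k)
    show ?case
    proof
      assume vk: "?v $ k \<noteq> 0"
      show "k \<in> T"
      proof (rule ccontr)
        assume kT: "k \<notin> T"
        then have k0: "k > 0" using T0 by (cases k) auto
        have z: "u $ i * ?v $ (k - i) = 0" if "i \<in> {Suc 0..k}" for i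
        proof (rule ccontr)
          assume "u $ i * ?v $ (k - i) \<noteq> 0"
          then have "u $ i \<noteq> 0" "?v $ (k - i) \<noteq> 0" by auto
          then have "i \<in> T" "k - i \<in> T" using u less that by (auto dest: supp_inD)
          then have "i + (k - i) \<in> T" by (rule Tadd)
          then show False using kT that by simp
        qed
        have "0 = (u * ?v) $ k" using uv k0 by simp
        also have "\<dots> = (\<Sum>i=0..k. u$i * ?v$(k - i))" by (simp add: fps_mult_nth)
        also have "\<dots> = u$0 * ?v$k + (\<Sum>i=Suc 0..k. u$i * ?v$(k - i))"
          by (simp add: sum.atLeast_Suc_atMost)
        also have "(\<Sum>i=Suc 0..k. u$i * ?v$(k - i)) = 0" using z by (intro sum.neutral) blast
        finally have "u$0 * ?v$k = 0" by simp
        then show False using u0 vk by simp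
      qed
    qed
  qed
  then show ?thesis by (auto intro: supp_inI)
qed

lemma nth_zero_below_iff: "(f = 0 \<or> m \<le> subdegree f) \<longleftrightarrow> (\<forall>k<m. f $ k = 0)"
proof
  assume "f = 0 \<or> m \<le> subdegree f"
  then show "\<forall>k<m. f $ k = 0"
  proof
    assume "m \<le> subdegree f" then show ?thesis by (meson nth_less_subdegree_zero order.strict_trans2)
  qed simp
next
  assume "\<forall>k<m. f $ k = 0"
  then show "f = 0 \<or> m \<le> subdegree f" using subdegree_geI by blast
qed

lemma X_power_shift:
  assumes "\<forall>k<m. f $ k = 0" shows "fps_X ^ m * fps_shift m f = (f :: 'a::comm_ring_1 fps)"
proof (rule fps_ext)
  fix k show "(fps_X ^ m * fps_shift m f) $ k = f $ k"
    using assms by (simp add: fps_X_power_mult_nth)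
qed

lemma shift_mult_left:
  assumes "\<forall>k<m. f $ k = 0" shows "fps_shift m (r * f) = r * fps_shift m (f :: 'a::comm_ring_1 fps)"
proof -
  have "r * f = fps_X ^ m * (r * fps_shift m f)" using X_power_shift[OF assms]
    by (metis mult.left_commute)
  then have "fps_shift m (r * f) = fps_shift m ((r * fps_shift m f) * fps_X ^ m)" by (simp add: mult.commute)
  then show ?thesis by simp
qed

lemma supp_in_shift:
  assumes "f \<in> supp_in S"
  shows "fps_shift m f \<in> supp_in {s - m | s. s \<in> S \<and> m \<le> s}"
proof (rule supp_inI)
  fix k assume "fps_shift m f $ k \<noteq> 0"
  then have "f $ (k + m) \<noteq> 0" by simp
  then have "k + m \<in> S" using assms by (auto dest: supp_inD)
  then show "k \<in> {s - m | s. s \<in> S \<and> m \<le> s}" by force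
qed

lemma nth_X_power_mult: "(fps_X ^ m * f :: 'a::comm_ring_1 fps) $ k = (if m \<le> k then f $ (k - m) else 0)"
  by (simp add: fps_X_power_mult_nth)

section \<open>Numerical semigroup combinatorics\<close>

context
  fixes H :: "nat set"
  assumes NS: "numerical_semigroup H"
begin

lemma ns_zero: "0 \<in> H" using NS by (simp add: numerical_semigroup_def)
lemma ns_add: "x \<in> H \<Longrightarrow> y \<in> H \<Longrightarrow> x + y \<in> H" using NS by (simp add: numerical_semigroup_def)
lemma ns_cofinite: "\<exists>N. \<forall>x\<ge>N. x \<in> H"
proof -
  have fin: "finite (UNIV - H)" using NS by (simp add: numerical_semigroup_def)
  then obtain N where "\<forall>x\<in>UNIV - H. x < N"
    by (metis finite_nat_set_iff_bounded)
  then show ?thesis by (metis DiffI UNIV_I leD)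
qed

lemma ns_infinite: "infinite H"
proof
  assume "finite H"
  then obtain M where "\<forall>x\<in>H. x < M" by (metis finite_nat_set_iff_bounded)
  moreover obtain N where "\<forall>x\<ge>N. x \<in> H" using ns_cofinite by blast
  ultimately have "M + N < M" by (meson le_add2)
  then show False by simp
qed

lemma a_in: "sg_elem H i \<in> H"
  unfolding sg_elem_def using ns_infinite by (rule enumerate_in_set)

lemma a_less_iff [simp]: "sg_elem H i < sg_elem H j \<longleftrightarrow> i < j"
  unfolding sg_elem_def using ns_infinite by simp

lemma a_le_iff [simp]: "sg_elem H i \<le> sg_elem H j \<longleftrightarrow> i \<le> j"
  unfolding sg_elem_def using ns_infinite by simp

lemma a_eq_iff [simp]: "sg_elem H i = sg_elem H j \<longleftrightarrow> i = j"
  by (metis a_le_iff order.antisym order_refl)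

lemma a_surj: "h \<in> H \<Longrightarrow> \<exists>i. sg_elem H i = h"
  unfolding sg_elem_def using ns_infinite enumerate_Ex by blast

lemma a_0 [simp]: "sg_elem H 0 = 0"
proof -
  obtain i where "sg_elem H i = 0" using a_surj ns_zero by blast
  then show ?thesis by (metis a_le_iff bot_nat_0.extremum le_zero_eq)
qed

lemma a_ge_idx: "i \<le> sg_elem H i"
proof (induction i)
  case (Suc i) then show ?case by (metis Suc_le_eq a_less_iff le_less_trans lessI)
qed simp

lemma between: "h \<in> H \<Longrightarrow> sg_elem H l < h \<Longrightarrow> sg_elem H (Suc l) \<le> h"
  by (metis Suc_leI a_le_iff a_less_iff a_surj)

lemma between2: "h \<in> H \<Longrightarrow> sg_elem H l \<le> h \<Longrightarrow> h < sg_elem H (Suc l) \<Longrightarrow> h = sg_elem H l"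
  by (metis between le_neq_implies_less not_le)

definition "cprop n \<longleftrightarrow> (\<forall>i. sg_elem H (n + i) = sg_elem H n + i)"

lemma cprop_ex: "\<exists>n. cprop n"
proof -
  obtain N where N: "\<forall>x\<ge>N. x \<in> H" using ns_cofinite by blast
  then obtain n0 where n0: "sg_elem H n0 = N" using a_surj by blast
  have "sg_elem H (n0 + i) = N + i" for i
  proof (induction i)
    case 0 then show ?case using n0 by simp
  next
    case (Suc i)
    have "sg_elem H (n0 + i) < N + Suc i" using Suc by simp
    then have "sg_elem H (Suc (n0 + i)) \<le> N + Suc i" using between N by simp
    moreover have "sg_elem H (Suc (n0 + i)) > N + i" using Suc
      by (metis a_less_iff lessI)
    ultimately show ?case by simp
  qed
  then show ?thesis unfolding cprop_def using n0 by auto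
qed

lemma n_prop: "cprop (sg_n H)"
  unfolding sg_n_def using cprop_ex unfolding cprop_def by (rule LeastI_ex)

lemma n_min: "m < sg_n H \<Longrightarrow> \<not> cprop m"
  unfolding sg_n_def cprop_def using not_less_Least by blast

lemma above_c: "x \<ge> sg_elem H (sg_n H) \<Longrightarrow> x \<in> H"
  using n_prop unfolding cprop_def
  by (metis a_in le_add_diff_inverse)

lemma c_minus_1: assumes "sg_n H \<ge> 1" shows "sg_elem H (sg_n H) - 1 \<notin> H"
proof
  let ?n = "sg_n H"
  assume h: "sg_elem H ?n - 1 \<in> H"
  have pos: "sg_elem H ?n > 0" using assms by (metis a_0 a_less_iff less_le_trans zero_less_one)
  have "sg_elem H (?n - 1) < sg_elem H ?n" using assms by simp
  then have "sg_elem H (?n - 1) \<le> sg_elem H ?n - 1" by linarith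
  moreover have "sg_elem H ?n - 1 < sg_elem H (Suc (?n - 1))" using assms pos by simp
  ultimately have eq: "sg_elem H ?n - 1 = sg_elem H (?n - 1)" using between2 h by blast
  have "cprop (?n - 1)" unfolding cprop_def
  proof
    fix i show "sg_elem H (?n - 1 + i) = sg_elem H (?n - 1) + i"
    proof (cases i)
      case 0 then show ?thesis by simp
    next
      case (Suc j)
      then have "?n - 1 + i = ?n + j" using assms by simp
      then show ?thesis using n_prop unfolding cprop_def using eq pos Suc by simp
    qed
  qed
  then show False using n_min assms by simp
qed

definition "C3 \<longleftrightarrow> (\<forall>i \<in> {1..sg_n H - 2}. \<forall>j \<in> {i + 2..sg_n H}.
                  sg_elem H j + sg_elem H (i + 1) - sg_elem H i \<in> H)"
definition "C3' \<longleftrightarrow> (\<forall>i \<in> {1..sg_n H - 2}. \<forall>y\<in>H. sg_elem H i \<le> y \<longrightarrow>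
                  (\<forall>x\<in>H. sg_elem H (i+2) \<le> x \<longrightarrow> y + x - sg_elem H i \<in> H))"

lemma C3ext:
  assumes "C3" "1 \<le> i" "i \<le> sg_n H - 2" "x \<in> H" "sg_elem H (i+2) \<le> x"
  shows "x + sg_elem H (i+1) - sg_elem H i \<in> H"
proof -
  obtain j where j: "sg_elem H j = x" using a_surj assms by blast
  have "sg_elem H (i+2) \<le> sg_elem H j" using j assms by simp
  then have ji: "i + 2 \<le> j" by simp
  have lt: "sg_elem H i < sg_elem H (i+1)" by simp
  show ?thesis
  proof (cases "j \<le> sg_n H")
    case True then show ?thesis using assms ji j unfolding C3_def by auto
  next
    case False
    then have "sg_elem H (sg_n H) \<le> x" using j by (metis a_le_iff nat_le_linear)
    then show ?thesis using lt by (intro above_c) linarith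
  qed
qed

lemma C3_imp_C3': assumes "C3" shows "C3'"
  unfolding C3'_def
proof (intro ballI impI)
  fix i y x
  assume i: "i \<in> {1..sg_n H - 2}" and y: "y \<in> H" "sg_elem H i \<le> y"
     and x: "x \<in> H" "sg_elem H (i+2) \<le> x"
  let ?a = "sg_elem H"
  have i1: "1 \<le> i" "i \<le> sg_n H - 2" using i by auto
  have P: "\<forall>x\<in>H. ?a (i+2) \<le> x \<longrightarrow> ?a (i+k) + x - ?a i \<in> H" for k
  proof (induction k rule: nat_less_induct)
    case (1 k)
    show ?case
    proof (intro ballI impI)
      fix x assume x: "x \<in> H" "?a (i+2) \<le> x"
      have lt01: "?a i < ?a (i+1)" "?a (i+1) < ?a (i+2)" by simp_all
      consider "k = 0" | "k = 1" | "k = 2" | m where "k = Suc m" "m \<ge> 2" by (metis One_nat_def Suc_1 Suc_lessI le_eq_less_or_eq less_Suc_eq_0_disj less_Suc_eq_le not_less)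
      then show "?a (i+k) + x - ?a i \<in> H"
      proof cases
        case 1 then show ?thesis using x by simp
      next
        case 2
        have "x + ?a (i+1) - ?a i \<in> H" using C3ext[OF assms i1 x] .
        then show ?thesis using 2 by (simp add: add.commute)
      next
        case 3
        define w where "w = x + ?a (i+1) - ?a i"
        have w: "w \<in> H" using C3ext[OF assms i1 x] w_def by simp
        have "w > ?a (i+2)" using x lt01 w_def by linarith
        then have w3: "w \<ge> ?a (Suc (i+2))" using between w by blast
        have e: "?a (i+k) = ?a (i+2)" using 3 by simp
        have eq: "?a (i+k) + x - ?a i = w + ?a (i+2) - ?a (i+1)"
          using e w_def lt01 x by linarith
        show ?thesis
        proof (cases "i + 1 \<le> sg_n H - 2")
          case True
          have "w + ?a (i+1+1) - ?a (i+1) \<in> H"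
            using C3ext[OF assms _ True w] w3 by (simp add: numeral_2_eq_2)
          then have "w + ?a (i+2) - ?a (i+1) \<in> H" by (simp add: numeral_2_eq_2)
          then show ?thesis using eq by simp
        next
          case False
          then have "Suc (i+2) \<ge> Suc (sg_n H)" using i1 by linarith
          then have "w \<ge> ?a (sg_n H)" using w3 by (meson a_le_iff le_SucE le_trans nat_le_linear not_less_eq_eq)
          then show ?thesis using eq lt01 by (intro above_c) linarith
        qed
      next
        case 4
        let ?K = "i + m"
        have IH: "\<forall>x\<in>H. ?a (i+2) \<le> x \<longrightarrow> ?a ?K + x - ?a i \<in> H" using 1 4 by simp
        have K2: "?a (i+2) \<le> ?a ?K" using 4 by simp
        define xx where "xx = ?a ?K + x - ?a i"
        have xx: "xx \<in> H" using IH x xx_def by blast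
        have y1: "?a ?K + ?a (i+1) - ?a i \<in> H"
          using C3ext[OF assms i1 a_in K2] .
        have y2: "?a ?K + ?a (i+2) - ?a i \<in> H" using IH a_in by blast
        have "?a ?K + ?a (i+1) - ?a i > ?a ?K" using lt01 by linarith
        then have s1: "?a ?K + ?a (i+1) - ?a i \<ge> ?a (Suc ?K)" using between y1 by blast
        have "?a ?K + ?a (i+2) - ?a i > ?a (Suc ?K)" using s1 lt01 by linarith
        then have s2: "?a ?K + ?a (i+2) - ?a i \<ge> ?a (Suc (Suc ?K))" using between y2 by blast
        have xx2: "xx \<ge> ?a (?K + 2)" using s2 x xx_def lt01 by simp
        have lK: "?a ?K < ?a (?K + 1)" by simp
        have e: "?a (i+k) = ?a (?K+1)" using 4 by simp
        have eq: "?a (i+k) + x - ?a i = xx + ?a (?K+1) - ?a ?K"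
          using e xx_def lt01 x lK K2 by linarith
        show ?thesis
        proof (cases "?K \<le> sg_n H - 2")
          case True
          have "xx + ?a (?K+1) - ?a ?K \<in> H"
            using C3ext[OF assms _ True xx xx2] i1 by simp
          then show ?thesis using eq by simp
        next
          case False
          then have "?K + 2 \<ge> sg_n H" by linarith
          then have "xx \<ge> ?a (sg_n H)" using xx2 by (meson a_le_iff le_trans)
          then show ?thesis using eq lK by (intro above_c) linarith
        qed
      qed
    qed
  qed
  obtain k where k: "?a (i + k) = y"
  proof -
    obtain j where j: "?a j = y" using a_surj y by blast
    then have "i \<le> j" using y by (metis a_le_iff)
    then show ?thesis using that j by (metis le_add_diff_inverse)
  qed
  show "y + x - ?a i \<in> H" using P[of k] k x by blast
qed

lemma C3'_imp_C3: assumes "C3'" shows "C3"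
  unfolding C3_def
proof (intro ballI)
  fix i j assume i: "i \<in> {1..sg_n H - 2}" and j: "j \<in> {i + 2..sg_n H}"
  have "sg_elem H (i+1) + sg_elem H j - sg_elem H i \<in> H"
    using assms i j a_in unfolding C3'_def by simp
  then show "sg_elem H j + sg_elem H (i + 1) - sg_elem H i \<in> H" by (simp add: add.commute)
qed


lemma R_simps [simp]:
  "carrier (sg_ring H) = sg_carrier H"
  "x \<otimes>\<^bsub>sg_ring H\<^esub> y = x * y"
  "\<one>\<^bsub>sg_ring H\<^esub> = 1"
  "\<zero>\<^bsub>sg_ring H\<^esub> = 0"
  "x \<oplus>\<^bsub>sg_ring H\<^esub> y = x + y"
  by (simp_all add: sg_ring_def)

lemma carrier_supp: "sg_carrier H = supp_in H"
  unfolding sg_carrier_def supp_in_def by auto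

lemma carr_mult: "x \<in> sg_carrier H \<Longrightarrow> y \<in> sg_carrier H \<Longrightarrow> (x * y :: 'k::field fps) \<in> sg_carrier H"
  unfolding carrier_supp
  by (rule supp_in_mono[OF supp_in_mult]) (auto simp: sumset_def intro: ns_add)

lemma carr_add: "x \<in> sg_carrier H \<Longrightarrow> y \<in> sg_carrier H \<Longrightarrow> (x + y :: 'k::field fps) \<in> sg_carrier H"
  unfolding carrier_supp by (rule supp_in_add)

lemma carr_uminus: "x \<in> sg_carrier H \<Longrightarrow> (- x :: 'k::field fps) \<in> sg_carrier H"
  unfolding carrier_supp by (rule supp_in_uminus)

lemma carr_diff: "x \<in> sg_carrier H \<Longrightarrow> y \<in> sg_carrier H \<Longrightarrow> (x - y :: 'k::field fps) \<in> sg_carrier H"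
  unfolding carrier_supp by (rule supp_in_diff)

lemma carr_const: "(fps_const c :: 'k::field fps) \<in> sg_carrier H"
  unfolding carrier_supp using ns_zero by (rule supp_in_const)

lemma carr_0: "(0 :: 'k::field fps) \<in> sg_carrier H" by (simp add: carrier_supp)
lemma carr_1: "(1 :: 'k::field fps) \<in> sg_carrier H"
  using carr_const[of 1] by simp

lemma carr_X: "m \<in> H \<Longrightarrow> (fps_X ^ m :: 'k::field fps) \<in> sg_carrier H"
  unfolding carrier_supp by (rule supp_in_X_power)

lemma cring_R: "cring (sg_ring H :: 'k::field fps ring)"
proof (rule cringI)
  show "abelian_group (sg_ring H :: 'k::field fps ring)"
    by (rule abelian_groupI) (auto simp: carr_add carr_0 algebra_simps intro!: bexI[of _ "- _"] carr_uminus)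
  show "comm_monoid (sg_ring H :: 'k::field fps ring)"
    by (rule comm_monoidI) (simp_all add: carr_mult carr_1 algebra_simps)
qed (simp add: algebra_simps)

lemma ainv_R: "x \<in> sg_carrier H \<Longrightarrow> \<ominus>\<^bsub>(sg_ring H :: 'k::field fps ring)\<^esub> x = - x"
proof -
  assume x: "x \<in> sg_carrier H"
  interpret cring "sg_ring H :: 'k::field fps ring" by (rule cring_R)
  show ?thesis using x by (intro minus_equality) (simp_all add: carr_uminus)
qed

lemma idealI_R:
  assumes sub: "J \<subseteq> sg_carrier H" and z: "0 \<in> J"
    and add: "\<And>x y. x \<in> J \<Longrightarrow> y \<in> J \<Longrightarrow> x + y \<in> J"
    and mul: "\<And>r x. r \<in> sg_carrier H \<Longrightarrow> x \<in> J \<Longrightarrow> r * x \<in> J"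
  shows "ideal J (sg_ring H :: 'k::field fps ring)"
proof -
  interpret cring "sg_ring H :: 'k::field fps ring" by (rule cring_R)
  have neg: "- x \<in> J" if "x \<in> J" for x
    using mul[OF carr_const[of "-1"] that] by (metis fps_const_1_eq_1 fps_const_neg mult_minus1)
  show ?thesis
  proof (rule idealI)
    show "ring (sg_ring H :: 'k fps ring)" by (rule ring_axioms)
    show "subgroup J (add_monoid (sg_ring H :: 'k fps ring))"
    proof (rule subgroup.intro)
      fix x assume "x \<in> J"
      then have "x \<in> sg_carrier H" using sub by blast
      then show "inv\<^bsub>add_monoid (sg_ring H :: 'k fps ring)\<^esub> x \<in> J"
        using ainv_R[of x] neg \<open>x \<in> J\<close> unfolding a_inv_def by simp
    qed (use sub z add in auto)
    show "\<And>a x. a \<in> J \<Longrightarrow> x \<in> carrier (sg_ring H :: 'k fps ring) \<Longrightarrow> x \<otimes>\<^bsub>(sg_ring H :: 'k fps ring)\<^esub> a \<in> J"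
      using mul by simp
    show "\<And>a x. a \<in> J \<Longrightarrow> x \<in> carrier (sg_ring H :: 'k fps ring) \<Longrightarrow> a \<otimes>\<^bsub>(sg_ring H :: 'k fps ring)\<^esub> x \<in> J"
      using mul by (metis R_simps(1) R_simps(2) mult.commute)
  qed
qed

definition modJ :: "'k::field fps set \<Rightarrow> ('k fps, 'k fps) module" where
  "modJ J = \<lparr> carrier = J, Group.monoid.mult = (*), Group.monoid.one = 1, zero = 0, add = (+),
                        smult = (*) \<rparr>"

lemma modJ_simps [simp]:
  "carrier (modJ J) = J" "x \<oplus>\<^bsub>modJ J\<^esub> y = x + y" "a \<odot>\<^bsub>modJ J\<^esub> x = a * x"
  "\<zero>\<^bsub>modJ J\<^esub> = 0"
  by (simp_all add: modJ_def)

lemma selfmod_simps [simp]: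
  "carrier (sg_self_module H) = sg_carrier H" "x \<oplus>\<^bsub>sg_self_module H\<^esub> y = x + y"
  "a \<odot>\<^bsub>sg_self_module H\<^esub> x = a * x"
  by (simp_all add: sg_self_module_def)

lemma ideal_closed:
  assumes "ideal J (sg_ring H :: 'k::field fps ring)"
  shows "J \<subseteq> sg_carrier H" "0 \<in> J" "\<And>x y. x \<in> J \<Longrightarrow> y \<in> J \<Longrightarrow> x + y \<in> J"
    "\<And>r x. r \<in> sg_carrier H \<Longrightarrow> x \<in> J \<Longrightarrow> r * x \<in> J"
    "\<And>x. x \<in> J \<Longrightarrow> - x \<in> J"
proof -
  interpret ideal J "sg_ring H :: 'k fps ring" by fact
  show "J \<subseteq> sg_carrier H" using a_subset by simp
  show "0 \<in> J" using additive_subgroup.zero_closed[OF ideal.axioms(1)[OF assms]] by simp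
  show "\<And>x y. x \<in> J \<Longrightarrow> y \<in> J \<Longrightarrow> x + y \<in> J"
    using additive_subgroup.a_closed[OF ideal.axioms(1)[OF assms]] by simp
  show m: "\<And>r x. r \<in> sg_carrier H \<Longrightarrow> x \<in> J \<Longrightarrow> r * x \<in> J" using I_l_closed by simp
  show "\<And>x. x \<in> J \<Longrightarrow> - x \<in> J"
    using m[OF carr_const[of "-1"]] by (metis fps_const_1_eq_1 fps_const_neg mult_minus1)
qed

lemma module_modJ:
  assumes "ideal J (sg_ring H :: 'k::field fps ring)"
  shows "Module.module (sg_ring H) (modJ J)"
proof -
  note cl = ideal_closed[OF assms]
  show ?thesis
proof (rule moduleI)
  show "cring (sg_ring H :: 'k fps ring)" by (rule cring_R)
  show "abelian_group (modJ J)"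
    by (rule abelian_groupI) (auto simp: cl algebra_simps intro!: bexI[of _ "- _"])
qed (simp_all add: cl algebra_simps)
qed

definition hom_stable :: "'k::field fps set \<Rightarrow> bool" where
  "hom_stable J \<longleftrightarrow> (\<forall>\<phi> \<in> lin_hom (sg_ring H) (modJ J) (sg_self_module H). \<phi> ` J \<subseteq> J)"

lemma lin_hom_modJ_iff:
  "\<phi> \<in> lin_hom (sg_ring H) (modJ J) (sg_self_module H) \<longleftrightarrow>
     (\<forall>x\<in>J. \<phi> x \<in> sg_carrier H) \<and> (\<forall>x\<in>J. \<forall>y\<in>J. \<phi> (x + y) = \<phi> x + \<phi> y) \<and>
     (\<forall>a\<in>sg_carrier H. \<forall>x\<in>J. \<phi> (a * x) = a * \<phi> x)"
  unfolding lin_hom_def by auto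


lemma hom_zero:
  assumes "\<phi> \<in> lin_hom (sg_ring H) (modJ J) (sg_self_module H)" "0 \<in> J"
  shows "\<phi> 0 = (0 :: 'k::field fps)"
proof -
  have "\<phi> (0 + 0) = \<phi> 0 + \<phi> 0" using assms unfolding lin_hom_modJ_iff by blast
  then have "\<phi> 0 + 0 = \<phi> 0 + \<phi> 0" by simp
  then show ?thesis by (metis add_left_cancel)
qed

lemma calT_iff:
  "(I :: 'k::field fps set) \<in> sg_calT H \<longleftrightarrow> I \<noteq> {0} \<and> ideal I (sg_ring H) \<and> hom_stable I"
proof
  interpret R: cring "sg_ring H :: 'k fps ring" by (rule cring_R)
  assume "I \<in> sg_calT H"
  then obtain M :: "('k fps, 'k fps) module" where I0: "I \<noteq> {0}" and
    modM: "Module.module (sg_ring H) M" and IM: "I = trace_ideal_of H M"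
    unfolding sg_calT_def by blast
  define S where "S = (\<Union>f \<in> lin_hom (sg_ring H) M (sg_self_module H). f ` carrier M)"
  have Ssub: "S \<subseteq> sg_carrier H" unfolding S_def lin_hom_def by auto
  have I: "I = genideal (sg_ring H) S" using IM unfolding trace_ideal_of_def S_def by simp
  have idI: "ideal I (sg_ring H)" using I R.genideal_ideal Ssub by simp
  have SI: "S \<subseteq> I" using I R.genideal_self Ssub by simp
  note cl = ideal_closed[OF idI]
  have "hom_stable I" unfolding hom_stable_def
  proof
    fix \<phi> assume phi: "\<phi> \<in> lin_hom (sg_ring H) (modJ I) (sg_self_module H)"
    note ph = phi[unfolded lin_hom_modJ_iff]
    define K where "K = {x \<in> I. \<phi> x \<in> I}"
    have idK: "ideal K (sg_ring H)"
    proof (rule idealI_R)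
      show "K \<subseteq> sg_carrier H" using cl unfolding K_def by blast
      show "0 \<in> K" unfolding K_def using hom_zero[OF phi] cl by simp
      show "x + y \<in> K" if "x \<in> K" "y \<in> K" for x y
        using that ph cl unfolding K_def by auto
      show "r * x \<in> K" if "r \<in> sg_carrier H" "x \<in> K" for r x
        using that ph cl unfolding K_def by auto
    qed
    have "S \<subseteq> K"
    proof
      fix s assume "s \<in> S"
      then obtain f m where f: "f \<in> lin_hom (sg_ring H) M (sg_self_module H)" and
        m: "m \<in> carrier M" and s: "s = f m" unfolding S_def by blast
      have fI: "f x \<in> I" if "x \<in> carrier M" for x
        using SI that f unfolding S_def by blast
      have "\<phi> \<circ> f \<in> lin_hom (sg_ring H) M (sg_self_module H)"
        unfolding lin_hom_def
      proof (intro CollectI conjI ballI)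
        show "\<phi> \<circ> f \<in> carrier M \<rightarrow> carrier (sg_self_module H)"
          using ph fI by auto
        fix x y assume x: "x \<in> carrier M" and y: "y \<in> carrier M"
        have "f (x \<oplus>\<^bsub>M\<^esub> y) = f x + f y" using f x y unfolding lin_hom_def by simp
        then show "(\<phi> \<circ> f) (x \<oplus>\<^bsub>M\<^esub> y) = (\<phi> \<circ> f) x \<oplus>\<^bsub>sg_self_module H\<^esub> (\<phi> \<circ> f) y"
          using ph fI x y by simp
      next
        fix a :: "'k fps" and x assume a: "a \<in> carrier (sg_ring H)" and x: "x \<in> carrier M"
        have "f (a \<odot>\<^bsub>M\<^esub> x) = a * f x" using f x a unfolding lin_hom_def by simp
        then show "(\<phi> \<circ> f) (a \<odot>\<^bsub>M\<^esub> x) = a \<odot>\<^bsub>sg_self_module H\<^esub> (\<phi> \<circ> f) x"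
          using ph fI x a by simp
      qed
      then have "(\<phi> \<circ> f) m \<in> S" unfolding S_def using m by blast
      then have "\<phi> (f m) \<in> S" by simp
      then show "s \<in> K" unfolding K_def using SI s fI m by auto
    qed
    then have "I \<subseteq> K" using I R.genideal_minimal[OF idK] by simp
    then show "\<phi> ` I \<subseteq> I" unfolding K_def by auto
  qed
  then show "I \<noteq> {0} \<and> ideal I (sg_ring H) \<and> hom_stable I" using I0 idI by simp
next
  interpret R: cring "sg_ring H :: 'k fps ring" by (rule cring_R)
  assume A: "I \<noteq> {0} \<and> ideal I (sg_ring H) \<and> hom_stable I"
  then have idI: "ideal I (sg_ring H)" and hs: "hom_stable I" by auto
  note cl = ideal_closed[OF idI]
  define S where "S = (\<Union>f \<in> lin_hom (sg_ring H) (modJ I) (sg_self_module H). f ` carrier (modJ I))"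
  have "id \<in> lin_hom (sg_ring H) (modJ I) (sg_self_module H)"
    unfolding lin_hom_modJ_iff using cl by auto
  then have IS: "I \<subseteq> S"
  proof -
    assume idh: "id \<in> lin_hom (sg_ring H) (modJ I) (sg_self_module H)"
    show "I \<subseteq> S"
    proof
      fix x assume "x \<in> I"
      then have "id x \<in> id ` carrier (modJ I)" by simp
      then show "x \<in> S" unfolding S_def using idh by (simp only: UN_iff) (metis id_apply)
    qed
  qed
  have SI: "S \<subseteq> I" using hs unfolding hom_stable_def S_def by auto
  have "trace_ideal_of H (modJ I) = genideal (sg_ring H) S"
    unfolding trace_ideal_of_def S_def by simp
  also have "\<dots> = I"
  proof
    show "genideal (sg_ring H) S \<subseteq> I" using R.genideal_minimal[OF idI SI] .
    show "I \<subseteq> genideal (sg_ring H) S" using IS R.genideal_self[of S] SI cl by auto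
  qed
  finally have "I = trace_ideal_of H (modJ I)" by simp
  then show "I \<in> sg_calT H" unfolding sg_calT_def using A module_modJ[OF idI] by blast
qed


section \<open>The ideals I_l and the conductor\<close>

definition Ge :: "nat \<Rightarrow> nat set" where "Ge l = {h \<in> H. sg_elem H l \<le> h}"

definition Cset :: "'k::field fps set" where "Cset = {x. \<forall>k < sg_elem H (sg_n H). x $ k = 0}"

lemma I_eq: "(sg_ideal_I H l :: 'k::field fps set) = {x \<in> sg_carrier H. \<forall>k < sg_elem H l. x $ k = 0}"
  unfolding sg_ideal_I_def nth_zero_below_iff by simp

lemma I_supp: "(sg_ideal_I H l :: 'k::field fps set) = supp_in (Ge l)"
proof (rule equalityI)
  show "(sg_ideal_I H l :: 'k fps set) \<subseteq> supp_in (Ge l)"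
  proof
    fix x :: "'k fps" assume "x \<in> sg_ideal_I H l"
    then have x: "x \<in> supp_in H" "\<forall>k < sg_elem H l. x $ k = 0" unfolding I_eq carrier_supp by auto
    have "k \<in> Ge l" if xk: "x $ k \<noteq> 0" for k
    proof -
      have "k \<in> H" using supp_inD[OF x(1) xk] .
      moreover have "\<not> k < sg_elem H l" using x xk by blast
      ultimately show "k \<in> Ge l" unfolding Ge_def by simp
    qed
    then show "x \<in> supp_in (Ge l)" by (rule supp_inI)
  qed
next
  show "supp_in (Ge l) \<subseteq> (sg_ideal_I H l :: 'k fps set)"
  proof
    fix x :: "'k fps" assume x: "x \<in> supp_in (Ge l)"
    have "x \<in> supp_in H" using x by (rule supp_in_mono) (auto simp: Ge_def)
    moreover have "\<forall>k < sg_elem H l. x $ k = 0"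
    proof (intro allI impI)
      fix k assume "k < sg_elem H l"
      then have "k \<notin> Ge l" unfolding Ge_def by simp
      then show "x $ k = 0" using x supp_inD' by blast
    qed
    ultimately show "x \<in> sg_ideal_I H l" unfolding I_eq carrier_supp by blast
  qed
qed

lemma zero_below_mult:
  assumes "\<forall>k<m. y $ k = 0" shows "\<forall>k<m. (q * y :: 'k::field fps) $ k = 0"
proof (intro allI impI)
  fix k assume k: "k < m"
  have eq: "q * y = fps_X ^ m * (q * fps_shift m y)" using X_power_shift[OF assms]
    by (metis mult.left_commute)
  have "\<not> m \<le> k" using k by simp
  then have "(fps_X ^ m * (q * fps_shift m y)) $ k = 0" by (simp add: nth_X_power_mult)
  then show "(q * y) $ k = 0" using eq by metis
qed

lemma zero_below_mono: "\<forall>k<m'. x $ k = 0 \<Longrightarrow> m \<le> m' \<Longrightarrow> \<forall>k<m. x $ k = 0"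
  by auto

lemma Cset_carrier: assumes "x \<in> Cset" shows "(x :: 'k::field fps) \<in> sg_carrier H"
  unfolding sg_carrier_def
proof (intro CollectI allI impI)
  fix m assume "m \<notin> H"
  then have "m < sg_elem H (sg_n H)" using above_c not_le by blast
  then show "x $ m = 0" using assms unfolding Cset_def by blast
qed

lemma Cset_sub_I: "l \<le> sg_n H \<Longrightarrow> (Cset :: 'k::field fps set) \<subseteq> sg_ideal_I H l"
proof
  fix x :: "'k fps" assume l: "l \<le> sg_n H" and x: "x \<in> Cset"
  have "sg_elem H l \<le> sg_elem H (sg_n H)" using l by simp
  then have "\<forall>k < sg_elem H l. x $ k = 0" using x zero_below_mono unfolding Cset_def by blast
  then show "x \<in> sg_ideal_I H l" unfolding I_eq using Cset_carrier[OF x] by blast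
qed

lemma I_sub_I: assumes "l \<le> l'" shows "(sg_ideal_I H l' :: 'k::field fps set) \<subseteq> sg_ideal_I H l"
proof -
  have "sg_elem H l \<le> sg_elem H l'" using assms by simp
  then show ?thesis unfolding I_eq using zero_below_mono by blast
qed

lemma In_sub_Cset: assumes "sg_n H \<le> l" shows "(sg_ideal_I H l :: 'k::field fps set) \<subseteq> Cset"
proof -
  have "sg_elem H (sg_n H) \<le> sg_elem H l" using assms by simp
  then show ?thesis unfolding I_eq Cset_def using zero_below_mono by blast
qed

lemma I_ideal: "ideal (sg_ideal_I H l :: 'k::field fps set) (sg_ring H)"
proof (rule idealI_R)
  show "sg_ideal_I H l \<subseteq> sg_carrier H" unfolding I_eq by auto
  show "0 \<in> sg_ideal_I H l" unfolding I_eq using carr_0 by auto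
  show "x + y \<in> sg_ideal_I H l" if "x \<in> sg_ideal_I H l" "y \<in> sg_ideal_I H l" for x y :: "'k fps"
    using that unfolding I_supp by (rule supp_in_add)
  show "r * x \<in> sg_ideal_I H l" if "r \<in> sg_carrier H" "x \<in> sg_ideal_I H l" for r x :: "'k fps"
    using that zero_below_mult carr_mult unfolding I_eq by auto
qed

lemma X_in_I: "(fps_X ^ sg_elem H l :: 'k::field fps) \<in> sg_ideal_I H l"
  unfolding I_eq using carr_X[OF a_in] by (simp add: fps_X_power_iff)

lemma hom_is_mult:
  assumes n1: "sg_n H \<ge> 1" and idJ: "ideal J (sg_ring H)" and CJ: "(Cset :: 'k::field fps set) \<subseteq> J"
    and phi: "\<phi> \<in> lin_hom (sg_ring H) (modJ J) (sg_self_module H)"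
  shows "\<exists>q. \<forall>y\<in>J. \<phi> y = q * y"
proof -
  let ?c = "sg_elem H (sg_n H)"
  note ph = phi[unfolded lin_hom_modJ_iff]
  note cl = ideal_closed[OF idJ]
  define P :: "'k fps" where "P = fps_X ^ ?c"
  have PC: "P \<in> Cset" unfolding Cset_def P_def by (simp add: fps_X_power_iff)
  then have PJ: "P \<in> J" using CJ by blast
  have Pc: "P \<in> sg_carrier H" using PC Cset_carrier by blast
  define g where "g = \<phi> P"
  have key: "P * \<phi> y = y * g" if "y \<in> J" for y
  proof -
    have "\<phi> (y * P) = y * g" using ph that PJ cl g_def by blast
    moreover have "\<phi> (P * y) = P * \<phi> y" using ph that Pc by blast
    ultimately show ?thesis by (simp add: mult.commute)
  qed
  have gz: "\<forall>k<?c. g $ k = 0"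
  proof (rule ccontr)
    assume "\<not> (\<forall>k<?c. g $ k = 0)"
    then obtain k where k: "k < ?c" "g $ k \<noteq> 0" by blast
    then have g0: "g \<noteq> 0" by auto
    define s where "s = subdegree g"
    have s: "s < ?c" using k s_def by (meson le_less_trans subdegree_leI)
    have gs: "g $ s \<noteq> 0" using g0 s_def by simp
    define h where "h = 2 * ?c - 1 - s"
    have hc: "?c \<le> h" using s h_def by linarith
    have yC: "(fps_X ^ h :: 'k fps) \<in> Cset" unfolding Cset_def using hc by (simp add: fps_X_power_iff)
    then have yJ: "fps_X ^ h \<in> J" using CJ by blast
    have "(P * \<phi> (fps_X ^ h)) $ (h + s) = (fps_X ^ h * g) $ (h + s)" using key[OF yJ] by simp
    also have "\<dots> = g $ s" by (simp add: nth_X_power_mult)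
    finally have "(\<phi> (fps_X ^ h)) $ (h + s - ?c) \<noteq> 0" using gs unfolding P_def
      by (simp add: nth_X_power_mult split: if_splits)
    moreover have "h + s - ?c = ?c - 1" using h_def s hc by linarith
    moreover have "\<phi> (fps_X ^ h) \<in> sg_carrier H" using ph yJ by blast
    ultimately have "?c - 1 \<in> H" unfolding sg_carrier_def by auto
    then show False using c_minus_1[OF n1] by simp
  qed
  define q where "q = fps_shift ?c g"
  have gq: "g = P * q" unfolding P_def q_def using X_power_shift[OF gz] by simp
  have "\<forall>y\<in>J. \<phi> y = q * y"
  proof
    fix y assume "y \<in> J"
    have "P * \<phi> y = y * g" using key \<open>y \<in> J\<close> by blast
    then have "P * \<phi> y = P * (q * y)" using gq by (simp only: ac_simps)
    moreover have "P \<noteq> 0" unfolding P_def by simp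
    ultimately show "\<phi> y = q * y" by simp
  qed
  then show ?thesis by blast
qed

lemma I_in_T:
  assumes n1: "sg_n H \<ge> 1" and l: "l \<le> sg_n H"
  shows "(sg_ideal_I H l :: 'k::field fps set) \<in> sg_calT H"
  unfolding calT_iff
proof (intro conjI)
  show "sg_ideal_I H l \<noteq> ({0} :: 'k fps set)" using X_in_I[of l] by (metis power_not_zero fps_X_neq_zero singletonD)
  show idI: "ideal (sg_ideal_I H l :: 'k fps set) (sg_ring H)" by (rule I_ideal)
  show "hom_stable (sg_ideal_I H l :: 'k fps set)" unfolding hom_stable_def
  proof (intro ballI subsetI)
    fix \<phi> x assume phi: "\<phi> \<in> lin_hom (sg_ring H) (modJ (sg_ideal_I H l)) (sg_self_module H)"
      and "x \<in> \<phi> ` (sg_ideal_I H l :: 'k fps set)"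
    then obtain y where y: "y \<in> sg_ideal_I H l" "x = \<phi> y" by blast
    obtain q where q: "\<forall>y\<in>sg_ideal_I H l. \<phi> y = q * y"
      using hom_is_mult[OF n1 idI Cset_sub_I[OF l] phi] by blast
    have "\<phi> y \<in> sg_carrier H" using phi y unfolding lin_hom_modJ_iff by blast
    moreover have "\<forall>k<sg_elem H l. (q * y) $ k = 0" using y zero_below_mult unfolding I_eq by blast
    ultimately show "x \<in> sg_ideal_I H l" using y q unfolding I_eq by simp
  qed
qed


section \<open>Multiplier maps and classification\<close>

lemma mult_map_stable:
  assumes idJ: "ideal J (sg_ring H)" and hs: "hom_stable (J :: 'k::field fps set)"
    and low: "\<forall>x\<in>J. \<forall>k<m. x $ k = 0"
    and car: "\<forall>x\<in>J. fps_shift m x * w \<in> sg_carrier H"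
    and xJ: "x \<in> J"
  shows "fps_shift m x * w \<in> J"
proof -
  define \<phi> where "\<phi> = (\<lambda>x. fps_shift m x * w)"
  have "\<phi> \<in> lin_hom (sg_ring H) (modJ J) (sg_self_module H)"
    unfolding lin_hom_modJ_iff
  proof (intro conjI ballI)
    fix x assume "x \<in> J" then show "\<phi> x \<in> sg_carrier H" using car unfolding \<phi>_def by blast
  next
    fix x y assume "x \<in> J" "y \<in> J"
    show "\<phi> (x + y) = \<phi> x + \<phi> y" unfolding \<phi>_def fps_shift_add by (rule distrib_right)
  next
    fix a :: "'k fps" and x assume "a \<in> sg_carrier H" "x \<in> J"
    have "\<forall>k<m. x $ k = 0" using low \<open>x \<in> J\<close> by blast
    then have "fps_shift m (a * x) = a * fps_shift m x" by (rule shift_mult_left)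
    then show "\<phi> (a * x) = a * \<phi> x" unfolding \<phi>_def by (simp only: mult.assoc)
  qed
  then have "\<phi> ` J \<subseteq> J" using hs unfolding hom_stable_def by blast
  then have "\<phi> x \<in> J" using xJ by blast
  then show ?thesis unfolding \<phi>_def .
qed

lemma min_elem:
  assumes "J \<noteq> {0}" "0 \<in> J"
  obtains f :: "'k::field fps" where "f \<in> J" "f \<noteq> 0" "\<forall>x\<in>J. \<forall>k<subdegree f. x $ k = 0"
proof -
  obtain x where x: "x \<in> J" "x \<noteq> 0" using assms by blast
  obtain f where f: "f \<in> J \<and> f \<noteq> 0" and fmin: "\<forall>y. y \<in> J \<and> y \<noteq> 0 \<longrightarrow> subdegree f \<le> subdegree y"
    using ex_has_least_nat[of "\<lambda>y. y \<in> J \<and> y \<noteq> 0" x subdegree] x by blast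
  have "\<forall>y\<in>J. \<forall>k<subdegree f. y $ k = 0"
  proof (intro ballI allI impI)
    fix y k assume "y \<in> J" "k < subdegree f"
    show "y $ k = 0"
    proof (cases "y = 0")
      case False
      then have "subdegree f \<le> subdegree y" using fmin \<open>y \<in> J\<close> by blast
      then have "k < subdegree y" using \<open>k < subdegree f\<close> by linarith
      then show ?thesis by (rule nth_less_subdegree_zero)
    qed simp
  qed
  then show ?thesis using that f by blast
qed

lemma contains_C:
  assumes idJ: "ideal J (sg_ring H)" and J0: "J \<noteq> {0}" and hs: "hom_stable (J :: 'k::field fps set)"
  shows "Cset \<subseteq> J"
proof
  note cl = ideal_closed[OF idJ]
  obtain f where fJ: "f \<in> J" and f0: "f \<noteq> 0" and low: "\<forall>x\<in>J. \<forall>k<subdegree f. x $ k = 0"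
    using min_elem[OF J0 cl(2)] by blast
  define m where "m = subdegree f"
  define u where "u = fps_shift m f"
  have u0: "u $ 0 \<noteq> 0" unfolding u_def m_def using f0 by simp
  fix g :: "'k fps" assume g: "g \<in> Cset"
  have car: "\<forall>x\<in>J. fps_shift m x * (inverse u * g) \<in> sg_carrier H"
  proof
    fix x assume "x \<in> J"
    have "\<forall>k<sg_elem H (sg_n H). ((fps_shift m x * inverse u) * g) $ k = 0"
      using g zero_below_mult unfolding Cset_def by blast
    then show "fps_shift m x * (inverse u * g) \<in> sg_carrier H"
      using Cset_carrier unfolding Cset_def by (simp add: mult.assoc)
  qed
  have "fps_shift m f * (inverse u * g) \<in> J"
    using mult_map_stable[OF idJ hs _ car fJ] low m_def by blast
  moreover have "fps_shift m f * (inverse u * g) = g"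
    using inverse_mult_eq_1'[OF u0] unfolding u_def by (simp add: mult.assoc[symmetric])
  ultimately show "g \<in> J" by simp
qed

lemma gap_zero:
  assumes "x \<in> sg_carrier H" "\<forall>k\<le>sg_elem H l. x $ k = 0"
  shows "\<forall>k<sg_elem H (Suc l). (x :: 'k::field fps) $ k = 0"
proof (intro allI impI)
  fix k assume k: "k < sg_elem H (Suc l)"
  show "x $ k = 0"
  proof (cases "k \<le> sg_elem H l")
    case True then show ?thesis using assms by blast
  next
    case False
    have "k \<notin> H"
    proof
      assume "k \<in> H"
      moreover have "sg_elem H l < k" using False by simp
      ultimately have "sg_elem H (Suc l) \<le> k" by (rule between)
      then show False using k by simp
    qed
    then show ?thesis using assms(1) unfolding sg_carrier_def by blast
  qed
qed

lemma reduce_step: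
  assumes x: "x \<in> sg_carrier H" "\<forall>k<sg_elem H l. x $ k = 0"
    and f: "f \<in> sg_carrier H" "\<forall>k<sg_elem H l. f $ k = 0" "f $ sg_elem H l \<noteq> 0"
  shows "x - fps_const (x $ sg_elem H l / f $ sg_elem H l) * f \<in> sg_carrier H"
    "\<forall>k<sg_elem H (Suc l). (x - fps_const (x $ sg_elem H l / f $ sg_elem H l) * f :: 'k::field fps) $ k = 0"
proof -
  show "x - fps_const (x $ sg_elem H l / f $ sg_elem H l) * f \<in> sg_carrier H"
    by (intro carr_diff carr_mult carr_const x f)
  then show "\<forall>k<sg_elem H (Suc l). (x - fps_const (x $ sg_elem H l / f $ sg_elem H l) * f) $ k = 0"
  proof (rule gap_zero, intro allI impI)
    fix k assume "k \<le> sg_elem H l"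
    then consider "k < sg_elem H l" | "k = sg_elem H l" by linarith
    then show "(x - fps_const (x $ sg_elem H l / f $ sg_elem H l) * f) $ k = 0"
    proof cases
      case 1 then show ?thesis using x(2) f(2) by simp
    next
      case 2 then show ?thesis using f(3) by simp
    qed
  qed
qed


lemma classify:
  assumes C3': "C3'" and idJ: "ideal J (sg_ring H)" and J0: "J \<noteq> {0}"
    and hs: "hom_stable (J :: 'k::field fps set)"
  shows "\<exists>l \<le> sg_n H. J = sg_ideal_I H l"
proof -
  note cl = ideal_closed[OF idJ]
  let ?a = "sg_elem H" and ?n = "sg_n H"
  obtain f where fJ: "f \<in> J" and f0: "f \<noteq> 0" and low0: "\<forall>x\<in>J. \<forall>k<subdegree f. x $ k = 0"
    using min_elem[OF J0 cl(2)] by blast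
  define m where "m = subdegree f"
  have low: "\<forall>x\<in>J. \<forall>k<m. x $ k = 0" using low0 m_def by simp
  define u where "u = fps_shift m f"
  have u0: "u $ 0 \<noteq> 0" unfolding u_def m_def using f0 by simp
  have fm: "f $ m \<noteq> 0" unfolding m_def using f0 by simp
  have CJ: "Cset \<subseteq> J" by (rule contains_C[OF idJ J0 hs])
  have fc: "f \<in> sg_carrier H" using fJ cl(1) by blast
  have "m \<in> H" using fc fm unfolding sg_carrier_def by blast
  then obtain i where i: "?a i = m" using a_surj by blast
  have XC: "(fps_X ^ ?a ?n :: 'k fps) \<in> Cset" unfolding Cset_def by (simp add: fps_X_power_iff)
  then have XJ: "fps_X ^ ?a ?n \<in> J" using CJ by blast
  have X1: "(fps_X ^ ?a ?n :: 'k fps) $ ?a ?n = 1" by (simp add: fps_X_power_iff)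
  have "\<not> ?a ?n < m"
  proof
    assume "?a ?n < m"
    then have "(fps_X ^ ?a ?n :: 'k fps) $ ?a ?n = 0" using low XJ by blast
    then show False using X1 by simp
  qed
  then have "\<not> ?n < i" using i by (subst a_less_iff[symmetric]) simp
  then have iln: "i \<le> ?n" by simp
  have JI: "J \<subseteq> sg_ideal_I H i"
  proof
    fix x assume xJ: "x \<in> J"
    have "x \<in> sg_carrier H" using cl(1) xJ by (rule subsetD)
    moreover have "\<forall>k<?a i. x $ k = 0" using low xJ i by simp
    ultimately show "x \<in> sg_ideal_I H i" unfolding I_eq by simp
  qed
  have IJ: "sg_ideal_I H i \<subseteq> J"
  proof (cases "i = ?n")
    case True
    have "(sg_ideal_I H i :: 'k fps set) \<subseteq> Cset" using True by (intro In_sub_Cset) simp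
    then show ?thesis using CJ by (rule order.trans)
  next
    case False
    then have iln': "i < ?n" using iln by simp
    show ?thesis
    proof (cases "i = 0")
      case True
      then have m0: "m = 0" using i by simp
      have fH: "f \<in> supp_in H" using fc carrier_supp by blast
      have "inverse f \<in> supp_in H"
        by (rule supp_in_inverse[OF ns_zero _ fH]) (use ns_add fm m0 in auto)
      then have invc: "inverse f \<in> sg_carrier H" using carrier_supp by blast
      have one: "inverse f * f = 1" using fm m0 by (intro inverse_mult_eq_1) simp
      show ?thesis
      proof
        fix r :: "'k fps" assume "r \<in> sg_ideal_I H i"
        then have rc: "r \<in> sg_carrier H" unfolding I_eq by blast
        have "(r * inverse f) * f \<in> J" using cl(4)[OF carr_mult[OF rc invc] fJ] .
        then show "r \<in> J" using one by (simp add: mult.assoc)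
      qed
    next
      case False
      then have i1: "1 \<le> i" by simp
      define A2 where "A2 = Ge (i + 2)"
      define T where "T = {e. \<forall>h\<in>A2. e + h \<in> A2}"
      have T0: "0 \<in> T" unfolding T_def by simp
      have Tadd: "x + y \<in> T" if "x \<in> T" "y \<in> T" for x y
        using that unfolding T_def by (simp add: add.assoc)
      have A2H: "A2 \<subseteq> H" unfolding A2_def Ge_def by blast
      have I2: "sg_ideal_I H (i+2) = (supp_in A2 :: 'k fps set)" unfolding A2_def by (rule I_supp)
      have TT: "sumset T T \<subseteq> T" unfolding sumset_def using Tadd by blast
      have TA: "sumset T A2 \<subseteq> A2" unfolding sumset_def T_def by blast
      have AT: "sumset A2 T \<subseteq> A2" unfolding sumset_def T_def by (auto simp: add.commute)
      have fi: "f $ ?a i \<noteq> 0" using fm i by simp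
      have flow: "\<forall>k<?a i. f $ k = 0" using low fJ i by simp
      have facts: "(\<forall>y\<in>H. ?a i \<le> y \<longrightarrow> (\<forall>x\<in>H. ?a (i+2) \<le> x \<longrightarrow> y + x - ?a i \<in> H)) \<and>
          (\<forall>x\<in>(sg_carrier H :: 'k fps set). fps_shift m x \<in> supp_in T) \<and> inverse u \<in> supp_in T"
        if True: "i + 2 \<le> ?n"
      proof -
        have iin: "i \<in> {1..?n - 2}" using i1 True by simp
        have C3i: "y + x - ?a i \<in> H" if "y \<in> H" "?a i \<le> y" "x \<in> H" "?a (i+2) \<le> x" for x y
          using C3' iin that unfolding C3'_def by blast
        have ET: "{s - m | s. s \<in> H \<and> m \<le> s} \<subseteq> T"
        proof
          fix e assume "e \<in> {s - m | s. s \<in> H \<and> m \<le> s}"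
          then obtain s where s: "s \<in> H" "m \<le> s" "e = s - m" by blast
          show "e \<in> T" unfolding T_def
          proof (intro CollectI ballI)
            fix h assume "h \<in> A2"
            then have h: "h \<in> H" "?a (i+2) \<le> h" unfolding A2_def Ge_def by auto
            have "s + h - ?a i \<in> H" using C3i[OF s(1) _ h] s i by simp
            moreover have "e + h = s + h - ?a i" using s i by simp
            ultimately show "e + h \<in> A2" unfolding A2_def Ge_def using h by simp
          qed
        qed
        have shT: "fps_shift m x \<in> supp_in T" if "x \<in> sg_carrier H" for x :: "'k fps"
        proof -
          have "x \<in> supp_in H" using that by (simp only: carrier_supp)
          then have "fps_shift m x \<in> supp_in {s - m | s. s \<in> H \<and> m \<le> s}" by (rule supp_in_shift)
          then show ?thesis using ET by (rule supp_in_mono)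
        qed
        have uT: "u \<in> supp_in T" unfolding u_def using shT fc .
        have iuT: "inverse u \<in> supp_in T" using supp_in_inverse[OF T0 Tadd uT u0] by blast
        show ?thesis using C3i shT iuT by blast
      qed
      have I2J: "sg_ideal_I H (i+2) \<subseteq> J"
      proof (cases "i + 2 \<le> ?n")
        case False
        have "(sg_ideal_I H (i+2) :: 'k fps set) \<subseteq> Cset" using False by (intro In_sub_Cset) simp
        then show ?thesis using CJ by (rule order.trans)
      next
        case True
        have shT: "\<forall>x\<in>(sg_carrier H :: 'k fps set). fps_shift m x \<in> supp_in T" and iuT: "inverse u \<in> supp_in T"
          using facts[OF True] by blast+
        show ?thesis
        proof
          fix y :: "'k fps" assume y: "y \<in> sg_ideal_I H (i+2)"
          have yA: "y \<in> supp_in A2" using y I2 by simp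
          have car: "\<forall>x\<in>J. fps_shift m x * (inverse u * y) \<in> sg_carrier H"
          proof
            fix x assume "x \<in> J"
            then have "fps_shift m x \<in> supp_in T" using shT cl(1) by blast
            then have "fps_shift m x * inverse u \<in> supp_in T"
              using supp_in_mono[OF supp_in_mult[OF _ iuT] TT] by blast
            then have "(fps_shift m x * inverse u) * y \<in> supp_in A2"
              using supp_in_mono[OF supp_in_mult[OF _ yA] TA] by blast
            then have "(fps_shift m x * inverse u) * y \<in> supp_in H" using A2H by (rule supp_in_mono)
            then show "fps_shift m x * (inverse u * y) \<in> sg_carrier H"
              by (simp add: mult.assoc carrier_supp)
          qed
          have "fps_shift m f * (inverse u * y) \<in> J"
            using mult_map_stable[OF idJ hs low car fJ] .
          moreover have "fps_shift m f * (inverse u * y) = y"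
            using inverse_mult_eq_1'[OF u0] unfolding u_def by (simp add: mult.assoc[symmetric])
          ultimately show "y \<in> J" by simp
        qed
      qed
      have XinJ: "x - fps_const c * g \<in> J" if "x \<in> J" "g \<in> J" for x g c
      proof -
        have "fps_const c * g \<in> J" using cl(4)[OF carr_const that(2)] .
        then have "x + - (fps_const c * g) \<in> J" using cl(3)[OF that(1) cl(5)] by blast
        then show ?thesis by simp
      qed
      have eJ: "\<exists>e\<in>J. e $ ?a (i+1) \<noteq> 0 \<and> (\<forall>k<?a (i+1). e $ k = 0)"
      proof (cases "i + 2 \<le> ?n")
        case False
        then have "i + 1 = ?n" using iln' by simp
        have p1: "(fps_X ^ ?a ?n :: 'k fps) $ ?a (i+1) \<noteq> 0" using X1 \<open>i + 1 = ?n\<close> by simp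
        have p2: "\<forall>k<?a (i+1). (fps_X ^ ?a ?n :: 'k fps) $ k = 0" using \<open>i + 1 = ?n\<close>
          by (simp add: fps_X_power_iff)
        show ?thesis using XJ p1 p2 by blast
      next
        case True
        have C3i: "\<forall>y\<in>H. ?a i \<le> y \<longrightarrow> (\<forall>x\<in>H. ?a (i+2) \<le> x \<longrightarrow> y + x - ?a i \<in> H)"
          and iuT: "inverse u \<in> supp_in T"
          using facts[OF True] by blast+
        show ?thesis
        proof (rule ccontr)
          assume ne: "\<not> ?thesis"
          have dec: "x - fps_const (x $ ?a i / f $ ?a i) * f \<in> sg_ideal_I H (i+2)" if xJ: "x \<in> J" for x
          proof -
            define z where "z = x - fps_const (x $ ?a i / f $ ?a i) * f"
            have xc: "x \<in> sg_carrier H" using cl(1) xJ by (rule subsetD)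
            have xlow: "\<forall>k<?a i. x $ k = 0" using low xJ i by simp
            note rs = reduce_step[OF xc xlow fc flow fi, folded z_def]
            have rs2: "\<forall>k<?a (i+1). z $ k = 0" using rs(2) by simp
            have zJ: "z \<in> J" using XinJ[OF xJ fJ] unfolding z_def .
            have nz: "\<not> (z $ ?a (i+1) \<noteq> 0 \<and> (\<forall>k<?a (i+1). z $ k = 0))" using ne zJ by blast
            then have za: "z $ ?a (i+1) = 0" using rs2 by blast
            have "\<forall>k\<le>?a (i+1). z $ k = 0"
            proof (intro allI impI)
              fix k assume "k \<le> ?a (i+1)"
              then consider "k < ?a (i+1)" | "k = ?a (i+1)" by linarith
              then show "z $ k = 0"
              proof cases
                case 1 then show ?thesis using rs2 by blast
              next
                case 2 then show ?thesis using za by simp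
              qed
            qed
            then have "\<forall>k<?a (Suc (i+1)). z $ k = 0" by (rule gap_zero[OF rs(1)])
            then have "\<forall>k<?a (i+2). z $ k = 0" by (simp add: numeral_2_eq_2)
            then show ?thesis unfolding I_eq z_def[symmetric] using rs(1) by blast
          qed
          define w where "w = inverse u * fps_X ^ ?a (i+1)"
          have ufm: "fps_shift m f = u" unfolding u_def ..
          have car: "\<forall>x\<in>J. fps_shift m x * w \<in> sg_carrier H"
          proof
            fix x assume xJ: "x \<in> J"
            define \<mu> where "\<mu> = x $ ?a i / f $ ?a i"
            define z where "z = x - fps_const \<mu> * f"
            have zI: "z \<in> sg_ideal_I H (i+2)" using dec[OF xJ] unfolding z_def \<mu>_def .
            have zA: "z \<in> supp_in A2" using zI I2 by simp
            have xz: "x = z + fps_const \<mu> * f" unfolding z_def by simp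
            have "fps_shift m (fps_const \<mu> * f) = fps_const \<mu> * u"
              using shift_mult_left[of m f "fps_const \<mu>"] low fJ ufm by simp
            then have sx: "fps_shift m x = fps_shift m z + fps_const \<mu> * u"
              using xz by (simp add: fps_shift_add)
            have one: "u * inverse u = 1" using inverse_mult_eq_1'[OF u0] .
            have eq: "fps_shift m x * w = (fps_shift m z * fps_X ^ ?a (i+1)) * inverse u
                        + fps_const \<mu> * fps_X ^ ?a (i+1)"
            proof -
              have "fps_shift m x * w = fps_shift m z * w + fps_const \<mu> * (u * inverse u) * fps_X ^ ?a (i+1)"
                unfolding sx w_def by (simp add: algebra_simps)
              then show ?thesis unfolding one w_def by (simp add: ac_simps)
            qed
            have s1: "fps_shift m z \<in> supp_in {s - m | s. s \<in> A2 \<and> m \<le> s}" using zA by (rule supp_in_shift)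
            have s2: "(fps_X ^ ?a (i+1) :: 'k fps) \<in> supp_in {?a (i+1)}" by (rule supp_in_X_power) simp
            have sub: "sumset {s - m | s. s \<in> A2 \<and> m \<le> s} {?a (i+1)} \<subseteq> A2"
            proof
              fix v assume "v \<in> sumset {s - m | s. s \<in> A2 \<and> m \<le> s} {?a (i+1)}"
              then obtain s where s: "s \<in> A2" "m \<le> s" "v = s - m + ?a (i+1)" unfolding sumset_def by blast
              have sH: "s \<in> H" "?a (i+2) \<le> s" using s(1) unfolding A2_def Ge_def by auto
              have lt: "?a i < ?a (i+1)" by simp
              have "?a (i+1) + s - ?a i \<in> H" using C3i a_in[of "i+1"] lt sH by simp
              moreover have "v = ?a (i+1) + s - ?a i" using s i by simp
              moreover have "?a (i+2) \<le> v" using s sH i lt by simp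
              ultimately show "v \<in> A2" unfolding A2_def Ge_def by simp
            qed
            have "fps_shift m z * fps_X ^ ?a (i+1) \<in> supp_in A2"
              using supp_in_mono[OF supp_in_mult[OF s1 s2] sub] .
            then have "(fps_shift m z * fps_X ^ ?a (i+1)) * inverse u \<in> supp_in A2"
              using supp_in_mono[OF supp_in_mult[OF _ iuT] AT] by blast
            then have "(fps_shift m z * fps_X ^ ?a (i+1)) * inverse u \<in> supp_in H" using A2H by (rule supp_in_mono)
            then have t1: "(fps_shift m z * fps_X ^ ?a (i+1)) * inverse u \<in> sg_carrier H" by (simp add: carrier_supp)
            have t2: "fps_const \<mu> * fps_X ^ ?a (i+1) \<in> sg_carrier H"
              by (intro carr_mult carr_const carr_X a_in)
            show "fps_shift m x * w \<in> sg_carrier H" unfolding eq using carr_add[OF t1 t2] .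
          qed
          have "fps_shift m f * w \<in> J" using mult_map_stable[OF idJ hs low car fJ] .
          moreover have "fps_shift m f * w = fps_X ^ ?a (i+1)"
            using inverse_mult_eq_1'[OF u0] unfolding w_def u_def by (simp add: mult.assoc[symmetric])
          ultimately have XiJ: "(fps_X ^ ?a (i+1) :: 'k fps) \<in> J" by simp
          have p1: "(fps_X ^ ?a (i+1) :: 'k fps) $ ?a (i+1) \<noteq> 0" by (simp add: fps_X_power_iff)
          have p2: "\<forall>k<?a (i+1). (fps_X ^ ?a (i+1) :: 'k fps) $ k = 0" by (simp add: fps_X_power_iff)
          show False using ne XiJ p1 p2 by blast
        qed
      qed
      then obtain e where eJ: "e \<in> J" and e1: "e $ ?a (i+1) \<noteq> 0" and elow: "\<forall>k<?a (i+1). e $ k = 0"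
        by blast
      have ec: "e \<in> sg_carrier H" using cl(1) eJ by (rule subsetD)
      show ?thesis
      proof
        fix x :: "'k fps" assume "x \<in> sg_ideal_I H i"
        then have xc: "x \<in> sg_carrier H" and xlow: "\<forall>k<?a i. x $ k = 0" unfolding I_eq by auto
        define x1 where "x1 = x - fps_const (x $ ?a i / f $ ?a i) * f"
        note r1 = reduce_step[OF xc xlow fc flow fi, folded x1_def]
        have r1': "\<forall>k<?a (i+1). x1 $ k = 0" using r1(2) by simp
        define x2 where "x2 = x1 - fps_const (x1 $ ?a (i+1) / e $ ?a (i+1)) * e"
        note r2 = reduce_step[OF r1(1) r1' ec elow e1, folded x2_def]
        have "x2 \<in> sg_ideal_I H (i+2)" unfolding I_eq using r2 by (simp add: numeral_2_eq_2)
        then have x2J: "x2 \<in> J" using I2J by blast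
        have fJ': "fps_const (x $ ?a i / f $ ?a i) * f \<in> J" using cl(4)[OF carr_const fJ] .
        have eJ': "fps_const (x1 $ ?a (i+1) / e $ ?a (i+1)) * e \<in> J" using cl(4)[OF carr_const eJ] .
        have "x = (x2 + fps_const (x1 $ ?a (i+1) / e $ ?a (i+1)) * e) + fps_const (x $ ?a i / f $ ?a i) * f"
          unfolding x2_def x1_def by simp
        then show "x \<in> J" using cl(3)[OF cl(3)[OF x2J eJ'] fJ'] by simp
      qed
    qed
  qed
  have "J = sg_ideal_I H i" using JI IJ by blast
  then show ?thesis using iln by blast
qed


section \<open>Non-closed trace ideals\<close>

lemma not_in_gap: "sg_elem H l < k \<Longrightarrow> k < sg_elem H (Suc l) \<Longrightarrow> k \<notin> H"
  using between not_le by blast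

definition gfam :: "nat \<Rightarrow> 'k::field \<Rightarrow> 'k fps" where
  "gfam i lam = fps_X ^ sg_elem H i + fps_const lam * fps_X ^ sg_elem H (i+1)"

definition Jfam :: "nat \<Rightarrow> 'k::field \<Rightarrow> 'k fps set" where
  "Jfam i lam = {fps_const \<mu> * gfam i lam + y | \<mu> y. y \<in> sg_ideal_I H (i+2)}"

lemma gfam_nth: "gfam i lam $ k = (if k = sg_elem H i then 1 else 0) + lam * (if k = sg_elem H (i+1) then 1 else 0)"
  unfolding gfam_def by (simp add: fps_X_power_iff)

lemma gfam_ai: "gfam i lam $ sg_elem H i = 1"
  unfolding gfam_nth by simp

lemma gfam_ai1: "gfam i lam $ sg_elem H (i+1) = lam"
  unfolding gfam_nth by simp

lemma gfam_carr: "gfam i lam \<in> sg_carrier H"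
  unfolding gfam_def by (intro carr_add carr_mult carr_const carr_X a_in)

lemma I2_low: "y \<in> sg_ideal_I H (i+2) \<Longrightarrow> y $ sg_elem H i = 0 \<and> y $ sg_elem H (i+1) = (0 :: 'k::field)"
  unfolding I_eq by simp

lemma Jfam_coef:
  assumes "x \<in> Jfam i lam"
  obtains \<mu> y where "x = fps_const \<mu> * gfam i lam + y" "y \<in> sg_ideal_I H (i+2)"
    "x $ sg_elem H i = \<mu>" "x $ sg_elem H (i+1) = \<mu> * lam"
proof -
  obtain \<mu> y where xy: "x = fps_const \<mu> * gfam i lam + y" and y: "y \<in> sg_ideal_I H (i+2)"
    using assms unfolding Jfam_def by blast
  have "x $ sg_elem H i = \<mu>" using I2_low[OF y] unfolding xy by (simp add: gfam_ai)
  moreover have "x $ sg_elem H (i+1) = \<mu> * lam" using I2_low[OF y] gfam_ai1[of i lam] unfolding xy by simp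
  ultimately show ?thesis using that xy y by blast
qed

lemma Jfam_ideal:
  assumes bad: "sg_elem H (i+1) - sg_elem H i \<notin> H"
  shows "ideal (Jfam i (lam::'k::field)) (sg_ring H)"
proof -
  let ?a = "sg_elem H" and ?g = "gfam i lam"
  note Icl = ideal_closed[OF I_ideal[of "i+2"]]
  have K1: "r * ?g \<in> sg_ideal_I H (i+2)" if r: "r \<in> sg_carrier H" "r $ 0 = 0" for r
  proof -
    have rs: "r \<in> supp_in {h \<in> H. 1 \<le> h}"
    proof (rule supp_inI)
      fix k assume "r $ k \<noteq> 0"
      then have "k \<in> H" "k \<noteq> 0" using r unfolding sg_carrier_def by auto
      then show "k \<in> {h \<in> H. 1 \<le> h}" by simp
    qed
    have gs: "?g \<in> supp_in {?a i, ?a (i+1)}"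
    proof (rule supp_inI)
      fix k assume "?g $ k \<noteq> 0"
      then show "k \<in> {?a i, ?a (i+1)}" unfolding gfam_nth by (auto split: if_splits)
    qed
    have sub: "sumset {h \<in> H. 1 \<le> h} {?a i, ?a (i+1)} \<subseteq> Ge (i+2)"
    proof
      fix v assume "v \<in> sumset {h \<in> H. 1 \<le> h} {?a i, ?a (i+1)}"
      then obtain h b where hb: "h \<in> H" "1 \<le> h" "b = ?a i \<or> b = ?a (i+1)" "v = h + b"
        unfolding sumset_def by blast
      have "b \<in> H" using hb(3) a_in by blast
      then have vH: "v \<in> H" using hb(1,4) ns_add by simp
      have "?a (Suc (Suc i)) \<le> v"
      proof (cases "b = ?a i")
        case True
        have "?a i < v" using hb True by simp
        then have s1: "?a (Suc i) \<le> v" using between vH by blast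
        have "v \<noteq> ?a (Suc i)"
        proof
          assume "v = ?a (Suc i)"
          then have "h = ?a (i+1) - ?a i" using hb True by simp
          then show False using bad hb by simp
        qed
        then have "?a (Suc i) < v" using s1 by simp
        then show ?thesis using between vH by blast
      next
        case False
        then have "?a (Suc i) < v" using hb by simp
        then show ?thesis using between vH by blast
      qed
      then show "v \<in> Ge (i+2)" unfolding Ge_def using vH by (simp add: numeral_2_eq_2)
    qed
    have "r * ?g \<in> supp_in (Ge (i+2))" using supp_in_mono[OF supp_in_mult[OF rs gs] sub] .
    then show ?thesis using I_supp by blast
  qed
  show ?thesis
  proof (rule idealI_R)
    show "Jfam i lam \<subseteq> sg_carrier H"
    proof
      fix x assume "x \<in> Jfam i lam"
      then obtain \<mu> y where "x = fps_const \<mu> * ?g + y" "y \<in> sg_ideal_I H (i+2)" unfolding Jfam_def by blast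
      then show "x \<in> sg_carrier H" using Icl(1) gfam_carr by (auto intro!: carr_add carr_mult carr_const)
    qed
    have "(0::'k fps) = fps_const 0 * ?g + 0" by simp
    then show "0 \<in> Jfam i lam" unfolding Jfam_def using Icl(2) by blast
    show "x + y \<in> Jfam i lam" if xJ: "x \<in> Jfam i lam" and yJ: "y \<in> Jfam i lam" for x y
    proof -
      obtain \<mu>1 y1 where 1: "x = fps_const \<mu>1 * ?g + y1" "y1 \<in> sg_ideal_I H (i+2)"
        using xJ unfolding Jfam_def by blast
      obtain \<mu>2 y2 where 2: "y = fps_const \<mu>2 * ?g + y2" "y2 \<in> sg_ideal_I H (i+2)"
        using yJ unfolding Jfam_def by blast
      have e: "fps_const (\<mu>1 + \<mu>2) * ?g = fps_const \<mu>1 * ?g + fps_const \<mu>2 * ?g"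
        by (simp add: distrib_right[symmetric])
      have "x + y = fps_const (\<mu>1 + \<mu>2) * ?g + (y1 + y2)" unfolding 1 2 e by (simp add: ac_simps)
      moreover have "y1 + y2 \<in> sg_ideal_I H (i+2)" using Icl(3) 1 2 by blast
      ultimately show ?thesis unfolding Jfam_def by blast
    qed
    show "r * x \<in> Jfam i lam" if r: "r \<in> sg_carrier H" and x: "x \<in> Jfam i lam" for r x
    proof -
      obtain \<mu> y where 1: "x = fps_const \<mu> * ?g + y" "y \<in> sg_ideal_I H (i+2)"
        using x unfolding Jfam_def by blast
      define r' where "r' = r - fps_const (r $ 0)"
      have r'c: "r' \<in> sg_carrier H" unfolding r'_def by (intro carr_diff r carr_const)
      have r'0: "r' $ 0 = 0" unfolding r'_def by simp
      have K: "r' * ?g \<in> sg_ideal_I H (i+2)" using K1[OF r'c r'0] .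
      have "r * x = fps_const (\<mu> * r $ 0) * ?g + (fps_const \<mu> * (r' * ?g) + r * y)"
        unfolding 1 r'_def by (simp add: algebra_simps)
      moreover have "fps_const \<mu> * (r' * ?g) + r * y \<in> sg_ideal_I H (i+2)"
        using Icl(3)[OF Icl(4)[OF carr_const K] Icl(4)[OF r 1(2)]] .
      ultimately show ?thesis unfolding Jfam_def by blast
    qed
  qed
qed


lemma gfam_in: "gfam i lam \<in> Jfam i lam"
proof -
  have "gfam i lam = fps_const 1 * gfam i lam + 0" by simp
  moreover have "(0 :: 'k::field fps) \<in> sg_ideal_I H (i+2)" using ideal_closed(2)[OF I_ideal] .
  ultimately show ?thesis unfolding Jfam_def by blast
qed

lemma I2_in_Jfam: "y \<in> sg_ideal_I H (i+2) \<Longrightarrow> y \<in> Jfam i (lam :: 'k::field)"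
proof -
  assume "y \<in> sg_ideal_I H (i+2)"
  moreover have "y = fps_const 0 * gfam i lam + y" by simp
  ultimately show ?thesis unfolding Jfam_def by blast
qed

lemma Jfam_inj: "Jfam i lam = Jfam i lam' \<Longrightarrow> lam = (lam' :: 'k::field)"
proof -
  assume eq: "Jfam i lam = Jfam i lam'"
  have "gfam i lam \<in> Jfam i lam'" using gfam_in eq by metis
  then obtain \<mu> y where "gfam i lam $ sg_elem H i = \<mu>" "gfam i lam $ sg_elem H (i+1) = \<mu> * lam'"
    by (rule Jfam_coef)
  then show ?thesis using gfam_ai[of i lam] gfam_ai1[of i lam] by simp
qed

lemma Jfam_notI:
  assumes lam: "lam \<noteq> (0 :: 'k::field)"
  shows "Jfam i lam \<notin> sg_calI H"
proof
  assume "Jfam i lam \<in> sg_calI H"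
  then obtain l where l: "l \<le> sg_n H" and eq: "Jfam i lam = sg_ideal_I H l" unfolding sg_calI_def by blast
  show False
  proof (cases "l \<le> i")
    case True
    have "(fps_X ^ sg_elem H i :: 'k fps) \<in> sg_ideal_I H l" using X_in_I I_sub_I[OF True] by blast
    then have "(fps_X ^ sg_elem H i :: 'k fps) \<in> Jfam i lam" using eq by simp
    then obtain \<mu> y where "(fps_X ^ sg_elem H i :: 'k fps) $ sg_elem H i = \<mu>"
      "(fps_X ^ sg_elem H i :: 'k fps) $ sg_elem H (i+1) = \<mu> * lam"
      by (rule Jfam_coef)
    then show False using lam by (simp add: fps_X_power_iff)
  next
    case False
    then have lt: "sg_elem H i < sg_elem H l" by simp
    have "gfam i lam \<in> sg_ideal_I H l" using gfam_in eq by metis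
    then have "gfam i lam $ sg_elem H i = 0" unfolding I_eq using lt by blast
    then show False using gfam_ai[of i lam] by simp
  qed
qed

lemma Jfam_T:
  assumes n1: "sg_n H \<ge> 1" and i2: "i + 2 \<le> j" and jn: "j \<le> sg_n H"
    and bad: "sg_elem H j + sg_elem H (i+1) - sg_elem H i \<notin> H"
  shows "Jfam i (lam :: 'k::field) \<in> sg_calT H"
proof -
  let ?a = "sg_elem H" and ?g = "gfam i lam" and ?J = "Jfam i lam"
  define d where "d = ?a (i+1) - ?a i"
  have lt: "?a i < ?a (i+1)" by simp
  have d0: "d \<noteq> 0" using lt d_def by simp
  have adj: "?a j + d = ?a j + ?a (i+1) - ?a i" using lt d_def by simp
  have bad': "d \<notin> H"
  proof
    assume "d \<in> H" then have "?a j + d \<in> H" using ns_add a_in by blast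
    then show False using bad adj by simp
  qed
  have idJ: "ideal ?J (sg_ring H)" using Jfam_ideal[of i lam] bad' d_def by simp
  note cl = ideal_closed[OF idJ]
  note Icl = ideal_closed[OF I_ideal[of "i+2"]]
  have i2n: "i + 2 \<le> sg_n H" using i2 jn by simp
  have J0: "?J \<noteq> {0}"
  proof
    assume "?J = {0}"
    then have "?g = 0" using gfam_in by blast
    then show False using gfam_ai[of i lam] by simp
  qed
  have CJ: "(Cset :: 'k fps set) \<subseteq> ?J" using Cset_sub_I[OF i2n] I2_in_Jfam by blast
  have hs: "hom_stable ?J" unfolding hom_stable_def
  proof (intro ballI subsetI)
    fix \<phi> z assume phi: "\<phi> \<in> lin_hom (sg_ring H) (modJ ?J) (sg_self_module H)" and "z \<in> \<phi> ` ?J"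
    then obtain x where xJ: "x \<in> ?J" and zx: "z = \<phi> x" by blast
    note ph = phi[unfolded lin_hom_modJ_iff]
    obtain q where q: "\<forall>y\<in>?J. \<phi> y = q * y" using hom_is_mult[OF n1 idJ CJ phi] by blast
    obtain \<mu> y where xy: "x = fps_const \<mu> * ?g + y" and y: "y \<in> sg_ideal_I H (i+2)"
      using xJ unfolding Jfam_def by blast
    have yJ: "y \<in> ?J" using I2_in_Jfam[OF y] .
    have qy: "q * y \<in> sg_ideal_I H (i+2)"
    proof -
      have "q * y \<in> sg_carrier H" using ph yJ q by metis
      moreover have "\<forall>k<?a (i+2). (q * y) $ k = 0" using y zero_below_mult unfolding I_eq by blast
      ultimately show ?thesis unfolding I_eq by blast
    qed
    have gJ: "?g \<in> ?J" by (rule gfam_in)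
    have qg: "q * ?g \<in> sg_carrier H" using ph gJ q by metis
    have qd: "q $ d = 0"
    proof (rule ccontr)
      assume qd0: "q $ d \<noteq> 0"
      have "(fps_X ^ ?a j :: 'k fps) \<in> sg_ideal_I H (i+2)" using X_in_I I_sub_I[OF i2] by blast
      then have XJ: "(fps_X ^ ?a j :: 'k fps) \<in> ?J" by (rule I2_in_Jfam)
      have "q * fps_X ^ ?a j \<in> sg_carrier H" using ph XJ q by metis
      moreover have "(q * fps_X ^ ?a j) $ (?a j + d) = q $ d"
        by (simp add: mult.commute[of q] nth_X_power_mult)
      ultimately have "?a j + d \<in> H" using qd0 unfolding sg_carrier_def by auto
      then show False using bad adj by simp
    qed
    define q' where "q' = q - fps_const (q $ 0)"
    define w where "w = q' * ?g"
    have wc: "w \<in> sg_carrier H"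
    proof -
      have "w = q * ?g - fps_const (q $ 0) * ?g" unfolding w_def q'_def by (simp add: algebra_simps)
      then show ?thesis using carr_diff[OF qg carr_mult[OF carr_const gfam_carr]] by simp
    qed
    have wcoef: "w $ k = (if ?a i \<le> k then q' $ (k - ?a i) else 0) + lam * (if ?a (i+1) \<le> k then q' $ (k - ?a (i+1)) else 0)" for k
    proof -
      have "w = fps_X ^ ?a i * q' + fps_const lam * (fps_X ^ ?a (i+1) * q')"
        unfolding w_def gfam_def by (simp add: algebra_simps)
      then show ?thesis by (simp add: nth_X_power_mult)
    qed
    have q'0: "q' $ 0 = 0" unfolding q'_def by simp
    have q'd: "q' $ d = 0" unfolding q'_def using qd d0 by simp
    have wlow: "\<forall>k<?a (i+2). w $ k = 0"
    proof (intro allI impI)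
      fix k assume k: "k < ?a (i+2)"
      consider "k < ?a i" | "k = ?a i" | "?a i < k \<and> k < ?a (Suc i)" | "k = ?a (i+1)"
        | "?a (Suc i) < k \<and> k < ?a (Suc (Suc i))"
        using k by (simp add: numeral_2_eq_2) linarith
      then show "w $ k = 0"
      proof cases
        case 1
        have lt': "?a i < ?a (Suc i)" by simp
        have nle: "\<not> ?a (Suc i) \<le> k" "\<not> ?a i \<le> k" using 1 lt' by linarith+
        then show ?thesis unfolding wcoef by simp
      next
        case 2 then show ?thesis unfolding wcoef using lt q'0 by simp
      next
        case 3 then have "k \<notin> H" using not_in_gap by blast
        then show ?thesis using wc unfolding sg_carrier_def by blast
      next
        case 4 then show ?thesis unfolding wcoef using lt q'0 q'd d_def by simp
      next
        case 5 then have "k \<notin> H" using not_in_gap by blast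
        then show ?thesis using wc unfolding sg_carrier_def by blast
      qed
    qed
    have wI: "w \<in> sg_ideal_I H (i+2)" unfolding I_eq using wc wlow by blast
    have "q * x = fps_const (\<mu> * q $ 0) * ?g + (fps_const \<mu> * w + q * y)"
      unfolding xy w_def q'_def by (simp add: algebra_simps)
    moreover have "fps_const \<mu> * w + q * y \<in> sg_ideal_I H (i+2)"
      using Icl(3)[OF Icl(4)[OF carr_const wI] qy] .
    ultimately have "q * x \<in> ?J" unfolding Jfam_def by blast
    then show "z \<in> ?J" using zx q xJ by simp
  qed
  show ?thesis unfolding calT_iff using J0 idJ hs by blast
qed


section \<open>Products of the ideals\<close>

lemma prodeq:
  "ideal_prod (sg_ring H) (sg_ideal_I H i) (sg_ideal_I H (i + 2))
      = (\<lambda>x. fps_X ^ sg_elem H i * x) ` (sg_ideal_I H (i + 2) :: 'k::field fps set)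
   \<longleftrightarrow> (\<forall>y\<in>H. sg_elem H i \<le> y \<longrightarrow> (\<forall>x\<in>H. sg_elem H (i+2) \<le> x \<longrightarrow> y + x - sg_elem H i \<in> H))"
  (is "?L = ?R \<longleftrightarrow> ?C")
proof
  assume eq: "?L = ?R"
  show ?C
  proof (intro ballI impI)
    fix y x assume y: "y \<in> H" "sg_elem H i \<le> y" and x: "x \<in> H" "sg_elem H (i+2) \<le> x"
    have Xy: "(fps_X ^ y :: 'k fps) \<in> sg_ideal_I H i"
      unfolding I_eq using carr_X[OF y(1)] y(2) by (simp add: fps_X_power_iff)
    have Xx: "(fps_X ^ x :: 'k fps) \<in> sg_ideal_I H (i+2)"
      unfolding I_eq using carr_X[OF x(1)] x(2) by (simp add: fps_X_power_iff)
    have "fps_X ^ y \<otimes>\<^bsub>sg_ring H\<^esub> fps_X ^ x \<in> ?L" by (rule ideal_prod.prod[OF Xy Xx])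
    then have "(fps_X ^ y * fps_X ^ x :: 'k fps) \<in> ?R" using eq by simp
    then obtain w where w: "w \<in> sg_ideal_I H (i+2)" and wx: "fps_X ^ y * fps_X ^ x = fps_X ^ sg_elem H i * (w :: 'k fps)"
      by blast
    have "(fps_X ^ sg_elem H i * w) $ (y + x) = 1" unfolding wx[symmetric] power_add[symmetric] by (simp add: fps_X_power_iff)
    moreover have "sg_elem H i \<le> y + x" using y by simp
    ultimately have "w $ (y + x - sg_elem H i) \<noteq> 0" by (simp add: nth_X_power_mult)
    moreover have "w \<in> sg_carrier H" using w unfolding I_eq by blast
    ultimately show "y + x - sg_elem H i \<in> H" unfolding sg_carrier_def by blast
  qed
next
  assume C: ?C
  show "?L = ?R"
  proof (rule equalityI)
    show "?L \<subseteq> ?R"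
    proof
      fix z assume "z \<in> ?L"
      then show "z \<in> ?R"
      proof (induction rule: ideal_prod.induct)
        case (prod u v)
        have u: "u \<in> supp_in (Ge i)" and v: "v \<in> supp_in (Ge (i+2))" using prod I_supp by blast+
        have ulow: "\<forall>k<sg_elem H i. u $ k = 0" using prod(1) unfolding I_eq by blast
        have zlow: "\<forall>k<sg_elem H i. (v * u) $ k = 0" using zero_below_mult[OF ulow] by blast
        have zs: "u * v \<in> supp_in (sumset (Ge i) (Ge (i+2)))" by (rule supp_in_mult[OF u v])
        have sub: "{s - sg_elem H i | s. s \<in> sumset (Ge i) (Ge (i+2)) \<and> sg_elem H i \<le> s} \<subseteq> Ge (i+2)"
        proof
          fix e assume "e \<in> {s - sg_elem H i | s. s \<in> sumset (Ge i) (Ge (i+2)) \<and> sg_elem H i \<le> s}"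
          then obtain y x where yx: "y \<in> Ge i" "x \<in> Ge (i+2)" "e = y + x - sg_elem H i"
            unfolding sumset_def by blast
          have y: "y \<in> H" "sg_elem H i \<le> y" and x: "x \<in> H" "sg_elem H (i+2) \<le> x"
            using yx unfolding Ge_def by auto
          have "e \<in> H" using C y x yx(3) by blast
          moreover have "sg_elem H (i+2) \<le> e" using yx(3) x y by linarith
          ultimately show "e \<in> Ge (i+2)" unfolding Ge_def by simp
        qed
        have "fps_shift (sg_elem H i) (u * v) \<in> supp_in (Ge (i+2))"
          using supp_in_mono[OF supp_in_shift[OF zs] sub] .
        then have sI: "fps_shift (sg_elem H i) (u * v) \<in> sg_ideal_I H (i+2)" using I_supp by blast
        have "u * v = fps_X ^ sg_elem H i * fps_shift (sg_elem H i) (u * v)"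
          using X_power_shift[of "sg_elem H i" "u * v"] zlow by (simp add: mult.commute)
        then show ?case using sI by simp
      next
        case (sum s1 s2)
        then obtain w1 w2 where w: "w1 \<in> sg_ideal_I H (i+2)" "s1 = fps_X ^ sg_elem H i * w1"
          "w2 \<in> sg_ideal_I H (i+2)" "s2 = fps_X ^ sg_elem H i * w2" by blast
        have "w1 + w2 \<in> sg_ideal_I H (i+2)" using ideal_closed(3)[OF I_ideal w(1) w(3)] .
        moreover have "s1 \<oplus>\<^bsub>sg_ring H\<^esub> s2 = fps_X ^ sg_elem H i * (w1 + w2)"
          using w by (simp add: distrib_left)
        ultimately show ?case by blast
      qed
    qed
  next
    show "?R \<subseteq> ?L"
    proof
      fix z assume "z \<in> ?R"
      then obtain w where w: "w \<in> sg_ideal_I H (i+2)" and z: "z = fps_X ^ sg_elem H i * w" by blast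
      have "fps_X ^ sg_elem H i \<otimes>\<^bsub>sg_ring H\<^esub> w \<in> ?L" by (rule ideal_prod.prod[OF X_in_I w])
      then show "z \<in> ?L" using z by simp
    qed
  qed
qed

lemma main:
  assumes n3: "sg_n H \<ge> 3"
  shows "((sg_calT H :: 'k::field fps set set) = sg_calI H
            \<longleftrightarrow> (\<forall>i \<in> {1..sg_n H - 2}.
                  ideal_prod (sg_ring H) (sg_ideal_I H i) (sg_ideal_I H (i + 2))
                  = (\<lambda>x. fps_X ^ sg_elem H i * x) ` (sg_ideal_I H (i + 2) :: 'k fps set)))
       \<and> ((\<forall>i \<in> {1..sg_n H - 2}.
                  ideal_prod (sg_ring H) (sg_ideal_I H i) (sg_ideal_I H (i + 2))
                  = (\<lambda>x. fps_X ^ sg_elem H i * x) ` (sg_ideal_I H (i + 2) :: 'k fps set))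
            \<longleftrightarrow> (\<forall>i \<in> {1..sg_n H - 2}. \<forall>j \<in> {i + 2..sg_n H}.
                  sg_elem H j + sg_elem H (i + 1) - sg_elem H i \<in> H))
       \<and> (infinite (UNIV :: 'k set) \<longrightarrow>
            ((sg_calT H :: 'k fps set set) = sg_calI H \<longleftrightarrow> finite (sg_calT H :: 'k fps set set)))"
proof -
  have n1: "sg_n H \<ge> 1" using n3 by simp
  let ?P2 = "\<forall>i \<in> {1..sg_n H - 2}.
                  ideal_prod (sg_ring H) (sg_ideal_I H i) (sg_ideal_I H (i + 2))
                  = (\<lambda>x. fps_X ^ sg_elem H i * x) ` (sg_ideal_I H (i + 2) :: 'k fps set)"
  have P2: "?P2 \<longleftrightarrow> C3'" unfolding C3'_def using prodeq by blast
  have P3: "(\<forall>i \<in> {1..sg_n H - 2}. \<forall>j \<in> {i + 2..sg_n H}.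
                  sg_elem H j + sg_elem H (i + 1) - sg_elem H i \<in> H) \<longleftrightarrow> C3"
    unfolding C3_def ..
  have C3C3': "C3 \<longleftrightarrow> C3'" using C3_imp_C3' C3'_imp_C3 by blast
  have IT: "sg_calI H \<subseteq> (sg_calT H :: 'k fps set set)"
    unfolding sg_calI_def using I_in_T[OF n1] by blast
  have good: "(sg_calT H :: 'k fps set set) = sg_calI H" if c3: "C3"
  proof
    show "(sg_calT H :: 'k fps set set) \<subseteq> sg_calI H"
    proof
      fix J :: "'k fps set" assume "J \<in> sg_calT H"
      then have "J \<noteq> {0}" "ideal J (sg_ring H)" "hom_stable J" unfolding calT_iff by auto
      then obtain l where "l \<le> sg_n H" "J = sg_ideal_I H l"
        using classify C3_imp_C3'[OF c3] by blast
      then show "J \<in> sg_calI H" unfolding sg_calI_def by blast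
    qed
  qed (rule IT)
  have bad: "\<exists>i j. i + 2 \<le> j \<and> j \<le> sg_n H \<and> sg_elem H j + sg_elem H (i + 1) - sg_elem H i \<notin> H"
    if nc3: "\<not> C3"
  proof -
    obtain i j where "i \<in> {1..sg_n H - 2}" "j \<in> {i + 2..sg_n H}"
      "sg_elem H j + sg_elem H (i + 1) - sg_elem H i \<notin> H"
      using nc3 unfolding C3_def by blast
    then show ?thesis by auto
  qed
  have badT: "(sg_calT H :: 'k fps set set) \<noteq> sg_calI H" if nc: "\<not> C3"
  proof -
    obtain i j where ij: "i + 2 \<le> j" "j \<le> sg_n H" "sg_elem H j + sg_elem H (i + 1) - sg_elem H i \<notin> H"
      using bad[OF nc] by blast
    have "Jfam i (1::'k) \<in> sg_calT H" using Jfam_T[OF n1 ij] .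
    moreover have "Jfam i (1::'k) \<notin> sg_calI H" by (rule Jfam_notI) simp
    ultimately show ?thesis by blast
  qed
  have P1: "((sg_calT H :: 'k fps set set) = sg_calI H) \<longleftrightarrow> C3"
    using good badT by blast
  have P4: "((sg_calT H :: 'k fps set set) = sg_calI H \<longleftrightarrow> finite (sg_calT H :: 'k fps set set))"
    if inf: "infinite (UNIV :: 'k set)"
  proof
    assume "(sg_calT H :: 'k fps set set) = sg_calI H"
    moreover have "sg_calI H = (\<lambda>l. sg_ideal_I H l :: 'k fps set) ` {..sg_n H}"
      unfolding sg_calI_def by auto
    ultimately show "finite (sg_calT H :: 'k fps set set)" by simp
  next
    assume fin: "finite (sg_calT H :: 'k fps set set)"
    show "(sg_calT H :: 'k fps set set) = sg_calI H"
    proof (rule ccontr)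
      assume "(sg_calT H :: 'k fps set set) \<noteq> sg_calI H"
      then have "\<not> C3" using P1 by blast
      then obtain i j where ij: "i + 2 \<le> j" "j \<le> sg_n H" "sg_elem H j + sg_elem H (i + 1) - sg_elem H i \<notin> H"
        using bad by blast
      have "Jfam i ` (UNIV :: 'k set) \<subseteq> sg_calT H" using Jfam_T[OF n1 ij] by blast
      moreover have "inj (Jfam i :: 'k \<Rightarrow> 'k fps set)" by (rule injI) (rule Jfam_inj)
      then have "infinite (Jfam i ` (UNIV :: 'k set))" using inf finite_imageD by blast
      ultimately show False using fin finite_subset by blast
    qed
  qed
  show ?thesis using P1 P2 P3 C3C3' P4 by blast
qed

end

theorem theorem4p1:
  fixes H :: "nat set"
  assumes "numerical_semigroup H"
    and "sg_n H \<ge> 3"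
  shows "((sg_calT H :: 'k::field fps set set) = sg_calI H
            \<longleftrightarrow> (\<forall>i \<in> {1..sg_n H - 2}.
                  ideal_prod (sg_ring H) (sg_ideal_I H i) (sg_ideal_I H (i + 2))
                  = (\<lambda>x. fps_X ^ sg_elem H i * x) ` (sg_ideal_I H (i + 2) :: 'k fps set)))
       \<and> ((\<forall>i \<in> {1..sg_n H - 2}.
                  ideal_prod (sg_ring H) (sg_ideal_I H i) (sg_ideal_I H (i + 2))
                  = (\<lambda>x. fps_X ^ sg_elem H i * x) ` (sg_ideal_I H (i + 2) :: 'k fps set))
            \<longleftrightarrow> (\<forall>i \<in> {1..sg_n H - 2}. \<forall>j \<in> {i + 2..sg_n H}.
                  sg_elem H j + sg_elem H (i + 1) - sg_elem H i \<in> H))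
       \<and> (infinite (UNIV :: 'k set) \<longrightarrow>
            ((sg_calT H :: 'k fps set set) = sg_calI H \<longleftrightarrow> finite (sg_calT H :: 'k fps set set)))"
  using main[OF assms] .

end
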